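(* For any $b$-braids $\alpha,\beta,\gamma\in B_b$, $|\sigma(\alpha\gamma\beta)-\sigma(\alpha\beta)-\sigma(\gamma)|\leq b-1$.
   Context: $B_b$ is the braid group on $b$ strands. For a braid $\beta$, $\sigma(\beta)$ is the signature of the standard closure of $\beta$, with all strands oriented in the same direction. The sign convention is such that $\sigma(a_1^n)=1-n$ for $n\ge1$. *)

theory Defs
  imports "Jordan_Normal_Form.Char_Poly"
begin

(* A braid word on b strands is a list of nonzero integers;
   the letter k stands for the Artin generator a_{|k|}^{sgn k}, 1 <= |k| <= b-1.
   The product of braids is concatenation of words. *)

definition braid_word :: "nat \<Rightarrow> int list \<Rightarrow> bool" where
  "braid_word b w \<longleftrightarrow> (\<forall>x\<in>set w. x \<noteq> 0 \<and> \<bar>x\<bar> < int b)"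

(* Canonical Seifert surface of the closure (Seifert's algorithm on the closed
   braid diagram: b stacked disks, one half-twisted band per letter).
   A basis of H_1 consists of the loops through two consecutive bands
   (positions p < q) of the same generator a_i. *)

definition braid_loops :: "int list \<Rightarrow> (nat \<times> nat) list" where
  "braid_loops w = [(p, q). p \<leftarrow> [0..<length w], q \<leftarrow> [Suc p..<length w],
      \<bar>w ! q\<bar> = \<bar>w ! p\<bar> \<and> (\<forall>r. p < r \<and> r < q \<longrightarrow> \<bar>w ! r\<bar> \<noteq> \<bar>w ! p\<bar>)]"

(* entry of the symmetrised Seifert form V + V^T on two basis loops *)
definition seifert_sym_entry :: "int list \<Rightarrow> nat \<times> nat \<Rightarrow> nat \<times> nat \<Rightarrow> int" where
  "seifert_sym_entry w l1 l2 =
     (let (p, q) = l1; (r, s) = l2; e = (\<lambda>k. sgn (w ! k)) in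
      if l1 = l2 then - (e p + e q)
      else if q = r then e q
      else if s = p then e p
      else if \<bar>w ! r\<bar> = \<bar>w ! p\<bar> + 1 then
        (if p < r \<and> r < q \<and> q < s then 1 else if r < p \<and> p < s \<and> s < q then -1 else 0)
      else if \<bar>w ! p\<bar> = \<bar>w ! r\<bar> + 1 then
        (if r < p \<and> p < s \<and> s < q then 1 else if p < r \<and> r < q \<and> q < s then -1 else 0)
      else 0)"

definition seifert_sym_matrix :: "int list \<Rightarrow> int mat" where
  "seifert_sym_matrix w =
     (let L = braid_loops w in
      mat (length L) (length L) (\<lambda>(i, j). seifert_sym_entry w (L ! i) (L ! j)))"

definition mat_signature :: "real mat \<Rightarrow> int" where
  "mat_signature A =
     int (\<Sum>x\<in>{x. 0 < x \<and> poly (char_poly A) x = 0}. order x (char_poly A))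
   - int (\<Sum>x\<in>{x. x < 0 \<and> poly (char_poly A) x = 0}. order x (char_poly A))"

(* signature of the closure of the braid (all strands oriented the same way) *)
definition braid_signature :: "int list \<Rightarrow> int" where
  "braid_signature w = mat_signature (map_mat real_of_int (seifert_sym_matrix w))"

end

theory Submission
  imports Defs
begin

lemma kernel_exists:
  fixes A :: "real mat"
  assumes A: "A \<in> carrier_mat N k" and lt: "N < k"
  shows "\<exists>v \<in> carrier_vec k. v \<noteq> 0\<^sub>v k \<and> A *\<^sub>v v = 0\<^sub>v N"
proof -
  define c where "c = (\<lambda>i. if i < N then row A i else 0\<^sub>v k)"
  define B where "B = mat\<^sub>r k k (\<lambda>i. if i = k - 1 then 0\<^sub>v k else c i)"
  have c: "c \<in> {0..<k} \<rightarrow> carrier_vec k" using A unfolding c_def by auto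
  have d: "det B = 0" unfolding B_def by (rule det_row_0) (use lt c in auto)
  have Bc: "B \<in> carrier_mat k k" unfolding B_def by auto
  from det_0_iff_vec_prod_zero_field[OF Bc] d obtain v where
    v: "v \<in> carrier_vec k" "v \<noteq> 0\<^sub>v k" "B *\<^sub>v v = 0\<^sub>v k" by auto
  have "A *\<^sub>v v = 0\<^sub>v N"
  proof (rule eq_vecI)
    fix i assume "i < dim_vec (0\<^sub>v N)"
    hence i: "i < N" by auto
    have "(B *\<^sub>v v) $ i = 0" using v i lt by auto
    moreover have "(B *\<^sub>v v) $ i = row A i \<bullet> v" using i lt A unfolding B_def c_def by auto
    ultimately show "(A *\<^sub>v v) $ i = 0\<^sub>v N $ i" using i A by auto
  qed (use A in auto)
  thus ?thesis using v by auto
qed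

definition qf :: "real mat \<Rightarrow> real vec \<Rightarrow> real" where
  "qf G x = x \<bullet> (G *\<^sub>v x)"

lemma qf_neg: assumes G: "G \<in> carrier_mat N N" and x: "x \<in> carrier_vec N"
  shows "qf G (- x) = qf G x"
proof -
  have "G *\<^sub>v (- x) = - (G *\<^sub>v x)" using G x by (intro eq_vecI) (auto simp: scalar_prod_uminus_right)
  thus ?thesis unfolding qf_def using G x
    by (simp add: scalar_prod_uminus_left scalar_prod_uminus_right)
qed

lemma indef_dim_bound:
  fixes G :: "real mat"
  assumes G: "G \<in> carrier_mat N N"
  and U: "U \<in> carrier_mat N p" and W: "W \<in> carrier_mat N q"
  and pos: "\<And>a. a \<in> carrier_vec p \<Longrightarrow> a \<noteq> 0\<^sub>v p \<Longrightarrow> qf G (U *\<^sub>v a) > 0"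
  and nonpos: "\<And>b. b \<in> carrier_vec q \<Longrightarrow> qf G (W *\<^sub>v b) \<le> 0"
  and Winj: "\<And>b. b \<in> carrier_vec q \<Longrightarrow> W *\<^sub>v b = 0\<^sub>v N \<Longrightarrow> b = 0\<^sub>v q"
  shows "p + q \<le> N"
proof (rule ccontr)
  assume "\<not> p + q \<le> N"
  hence lt: "N < p + q" by auto
  define C where "C = mat N (p+q) (\<lambda>(i,j). if j < p then U $$ (i,j) else W $$ (i,j-p))"
  have C: "C \<in> carrier_mat N (p+q)" unfolding C_def by auto
  from kernel_exists[OF C lt] obtain v where v: "v \<in> carrier_vec (p+q)" "v \<noteq> 0\<^sub>v (p+q)"
    "C *\<^sub>v v = 0\<^sub>v N" by auto
  define a where "a = vec p (\<lambda>j. v $ j)"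
  define b where "b = vec q (\<lambda>j. v $ (p + j))"
  have a: "a \<in> carrier_vec p" and b: "b \<in> carrier_vec q" unfolding a_def b_def by auto
  have Cv: "C *\<^sub>v v = U *\<^sub>v a + W *\<^sub>v b"
  proof (rule eq_vecI)
    fix i assume "i < dim_vec (U *\<^sub>v a + W *\<^sub>v b)"
    hence i: "i < N" using U W by auto
    have "(C *\<^sub>v v) $ i = (\<Sum>j<p+q. C $$ (i,j) * v $ j)"
      using C v(1) i by (auto simp: scalar_prod_def lessThan_atLeast0)
    also have "\<dots> = (\<Sum>j<p. C $$ (i,j) * v $ j) + (\<Sum>j<q. C $$ (i,p+j) * v $ (p+j))"
      by (induct q) (simp_all add: ac_simps)
    also have "\<dots> = (\<Sum>j<p. U $$ (i,j) * a $ j) + (\<Sum>j<q. W $$ (i,j) * b $ j)"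
      unfolding C_def a_def b_def using i by (auto intro!: sum.cong)
    also have "\<dots> = (U *\<^sub>v a + W *\<^sub>v b) $ i"
      using U W a b i by (auto simp: scalar_prod_def lessThan_atLeast0)
    finally show "(C *\<^sub>v v) $ i = (U *\<^sub>v a + W *\<^sub>v b) $ i" .
  qed (use C U W in auto)
  hence sum0: "U *\<^sub>v a + W *\<^sub>v b = 0\<^sub>v N" using v by auto
  have Ua: "U *\<^sub>v a = - (W *\<^sub>v b)"
  proof (rule eq_vecI)
    fix i assume "i < dim_vec (- (W *\<^sub>v b))"
    hence i: "i < N" using W by auto
    have "(U *\<^sub>v a + W *\<^sub>v b) $ i = 0" using sum0 i by auto
    thus "(U *\<^sub>v a) $ i = (- (W *\<^sub>v b)) $ i" using i U W by auto
  qed (use U W in auto)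
  show False
  proof (cases "a = 0\<^sub>v p")
    case False
    have "qf G (U *\<^sub>v a) > 0" using pos[OF a False] .
    moreover have "qf G (U *\<^sub>v a) = qf G (W *\<^sub>v b)" unfolding Ua
      by (rule qf_neg[OF G]) (use W b in auto)
    ultimately show False using nonpos[OF b] by auto
  next
    case True
    hence "U *\<^sub>v a = 0\<^sub>v N" using U by auto
    hence "W *\<^sub>v b = 0\<^sub>v N" using sum0 U W a b by auto
    hence b0: "b = 0\<^sub>v q" using Winj[OF b] by auto
    have "v = 0\<^sub>v (p+q)"
    proof (rule eq_vecI)
      fix j assume "j < dim_vec (0\<^sub>v (p + q))"
      hence j: "j < p + q" by auto
      show "v $ j = 0\<^sub>v (p + q) $ j"
      proof (cases "j < p")
        case True thus ?thesis using arg_cong[OF \<open>a = 0\<^sub>v p\<close>, of "\<lambda>x. x $ j"] j unfolding a_def by auto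
      next
        case False
        have "b $ (j - p) = 0" using b0 j False by auto
        thus ?thesis using j False unfolding b_def by auto
      qed
    qed (use v in auto)
    thus False using v by auto
  qed
qed

lemma assoc4: fixes A B C D :: "'a::comm_ring_1 mat"
  assumes "A \<in> carrier_mat n n" "B \<in> carrier_mat n n" "C \<in> carrier_mat n n" "D \<in> carrier_mat n n"
  shows "A * B * (C * D) = A * (B * C) * D"
  using assms by (simp add: assoc_mult_mat[of _ n n _ n _ n])
lemma assoc5: fixes A B C D F :: "'a::comm_ring_1 mat"
  assumes "A \<in> carrier_mat n n" "B \<in> carrier_mat n n" "C \<in> carrier_mat n n" "D \<in> carrier_mat n n" "F \<in> carrier_mat n n"
  shows "A * B * C * (D * F) = A * (B * C * D) * F"
  using assms by (simp add: assoc_mult_mat[of _ n n _ n _ n])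
lemma assoc6: fixes A B C D F :: "'a::comm_ring_1 mat"
  assumes "A \<in> carrier_mat n n" "B \<in> carrier_mat n n" "C \<in> carrier_mat n n" "D \<in> carrier_mat n n" "F \<in> carrier_mat n n"
  shows "A * (B * C * D) * F = A * B * C * (D * F)"
  using assms by (simp add: assoc_mult_mat[of _ n n _ n _ n])

definition blk1 :: "real \<Rightarrow> real mat \<Rightarrow> real mat" where
  "blk1 a M = mat (Suc (dim_row M)) (Suc (dim_col M))
     (\<lambda>(i,j). if i = 0 \<and> j = 0 then a else if i = 0 \<or> j = 0 then 0 else M $$ (i - 1, j - 1))"

lemma blk1_carrier: "M \<in> carrier_mat n m \<Longrightarrow> blk1 a M \<in> carrier_mat (Suc n) (Suc m)"
  unfolding blk1_def by auto

lemma blk1_mult: assumes M: "M \<in> carrier_mat n m" and N: "N \<in> carrier_mat m k"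
  shows "blk1 a M * blk1 b N = blk1 (a * b) (M * N)"
proof (rule eq_matI)
  fix i j assume i: "i < dim_row (blk1 (a * b) (M * N))" and j: "j < dim_col (blk1 (a * b) (M * N))"
  hence i: "i < Suc n" and j: "j < Suc k" using M N unfolding blk1_def by auto
  have "(blk1 a M * blk1 b N) $$ (i, j) = (\<Sum>l<Suc m. blk1 a M $$ (i,l) * blk1 b N $$ (l,j))"
    using M N i j by (simp add: blk1_def scalar_prod_def lessThan_atLeast0)
  also have "\<dots> = blk1 a M $$ (i,0) * blk1 b N $$ (0,j) + (\<Sum>l<m. blk1 a M $$ (i,Suc l) * blk1 b N $$ (Suc l,j))"
    by (rule sum.lessThan_Suc_shift)
  also have "\<dots> = blk1 (a * b) (M * N) $$ (i, j)"
    using M N i j by (cases i; cases j) (auto simp: blk1_def scalar_prod_def lessThan_atLeast0)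
  finally show "(blk1 a M * blk1 b N) $$ (i, j) = blk1 (a * b) (M * N) $$ (i, j)" .
qed (use M N in \<open>auto simp: blk1_def\<close>)

lemma blk1_transpose: "transpose_mat (blk1 a M) = blk1 a (transpose_mat M)"
  unfolding blk1_def by (rule eq_matI) auto

lemma blk1_one: "blk1 1 (1\<^sub>m n) = 1\<^sub>m (Suc n)"
  unfolding blk1_def by (rule eq_matI) auto

definition diag_real :: "real list \<Rightarrow> real mat" where
  "diag_real d = mat (length d) (length d) (\<lambda>(i,j). if i = j then d ! i else 0)"

lemma diag_real_carrier: "diag_real d \<in> carrier_mat (length d) (length d)"
  unfolding diag_real_def by auto

lemma diag_real_Cons: "diag_real (a # d) = blk1 a (diag_real d)"
  unfolding diag_real_def blk1_def by (rule eq_matI) auto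

definition orth_mat :: "nat \<Rightarrow> real mat \<Rightarrow> bool" where
  "orth_mat n Q \<longleftrightarrow> Q \<in> carrier_mat n n \<and> transpose_mat Q * Q = 1\<^sub>m n"

lemma orth_mat_right: assumes "orth_mat n Q" shows "Q * transpose_mat Q = 1\<^sub>m n"
  using assms mat_mult_left_right_inverse[of "transpose_mat Q" n Q] unfolding orth_mat_def by auto

(* Householder-type completion *)
lemma unit_vec_completion:
  fixes v :: "real vec"
  assumes v: "v \<in> carrier_vec n" and n: "0 < n" and vv: "v \<bullet> v = 1"
  shows "\<exists>W. orth_mat n W \<and> col W 0 = v"
proof (cases "v $ 0 = 1")
  case True
  have sq: "v \<bullet> v = (\<Sum>i<n. v $ i * v $ i)" using v by (simp add: scalar_prod_def lessThan_atLeast0)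
  also have "\<dots> = v $ 0 * v $ 0 + (\<Sum>i<n - 1. v $ Suc i * v $ Suc i)"
    using n sum.lessThan_Suc_shift[of "\<lambda>i. v $ i * v $ i" "n - 1"] by simp
  finally have "(\<Sum>i<n - 1. v $ Suc i * v $ Suc i) = 0" using vv True by simp
  hence z: "\<forall>i\<in>{..<n-1}. v $ Suc i * v $ Suc i = 0"
    by (subst sum_nonneg_eq_0_iff[symmetric]) auto
  have "v = unit_vec n 0"
  proof (rule eq_vecI)
    fix i assume "i < dim_vec (unit_vec n 0)"
    hence i: "i < n" by simp
    show "v $ i = unit_vec n 0 $ i"
    proof (cases i)
      case 0 thus ?thesis using True i by simp
    next
      case (Suc k) thus ?thesis using z i by auto
    qed
  qed (use v in auto)
  thus ?thesis using n by (intro exI[of _ "1\<^sub>m n"]) (auto simp: orth_mat_def)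
next
  case False
  define u where "u = vec n (\<lambda>i. (if i = 0 then 1 else 0) - v $ i)"
  define c where "c = 1 / u $ 0"
  define W where "W = mat n n (\<lambda>(i,j). (if i = j then 1 else 0) - c * u $ i * u $ j)"
  have u0: "u $ 0 = 1 - v $ 0" unfolding u_def using n by simp
  have u0nz: "u $ 0 \<noteq> 0" using u0 False by simp
  have uu: "(\<Sum>k<n. u $ k * u $ k) = 2 * u $ 0"
  proof -
    have "(\<Sum>k<n. u $ k * u $ k) = (\<Sum>k<n. (if k = 0 then 1 else 0) - (if k = 0 then 2 * v $ 0 else 0) + v $ k * v $ k)"
      unfolding u_def by (intro sum.cong) (auto simp: algebra_simps)
    also have "\<dots> = 1 - 2 * v $ 0 + (\<Sum>k<n. v $ k * v $ k)"
      using n by (simp add: sum.distrib sum_subtractf)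
    also have "(\<Sum>k<n. v $ k * v $ k) = 1" using vv v by (simp add: scalar_prod_def lessThan_atLeast0)
    finally show ?thesis using u0 by simp
  qed
  have W: "W \<in> carrier_mat n n" unfolding W_def by auto
  have WT: "transpose_mat W = W" unfolding W_def by (rule eq_matI) auto
  have "transpose_mat W * W = 1\<^sub>m n"
  proof (rule eq_matI)
    fix i j assume "i < dim_row (1\<^sub>m n)" "j < dim_col (1\<^sub>m n)"
    hence i: "i < n" and j: "j < n" by auto
    have "(transpose_mat W * W) $$ (i, j) = (\<Sum>k<n. W $$ (k,i) * W $$ (k,j))"
      using W i j by (simp add: scalar_prod_def lessThan_atLeast0)
    also have "\<dots> = (\<Sum>k<n. (if k = i then (if i = j then 1 else 0) else 0)
         - (if k = i then c * u $ i * u $ j else 0) - (if k = j then c * u $ j * u $ i else 0)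
         + c * c * u $ i * u $ j * (u $ k * u $ k))"
      unfolding W_def using i j by (intro sum.cong) (auto simp: algebra_simps)
    also have "\<dots> = (if i = j then 1 else 0) - c * u $ i * u $ j - c * u $ j * u $ i
         + c * c * u $ i * u $ j * (\<Sum>k<n. u $ k * u $ k)"
      using i j by (simp add: sum.distrib sum_subtractf sum_distrib_left)
    also have "\<dots> = (if i = j then 1 else 0)" unfolding uu c_def using u0nz by (simp add: field_simps)
    finally show "(transpose_mat W * W) $$ (i, j) = 1\<^sub>m n $$ (i, j)" using i j by simp
  qed (use W in auto)
  moreover have "col W 0 = v"
  proof (rule eq_vecI)
    fix i assume "i < dim_vec v" hence i: "i < n" using v by auto
    show "col W 0 $ i = v $ i" using i n u0nz unfolding W_def c_def
      by (simp add: u_def)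
  qed (use v W n in auto)
  ultimately show ?thesis using W by (auto simp: orth_mat_def)
qed

lemma sym_real_eigen:
  fixes A :: "real mat"
  assumes A: "A \<in> carrier_mat n n" and sym: "transpose_mat A = A" and n: "0 < n"
  shows "\<exists>l v. v \<in> carrier_vec n \<and> v \<bullet> v = 1 \<and> A *\<^sub>v v = l \<cdot>\<^sub>v v"
proof -
  define Ac where "Ac = map_mat complex_of_real A"
  have Ac: "Ac \<in> carrier_mat n n" using A unfolding Ac_def by auto
  obtain as where cp: "char_poly Ac = (\<Prod>a\<leftarrow>as. [:- a, 1:])" and len: "length as = n"
    using char_poly_factorized[OF Ac] by auto
  define z where "z = as ! 0"
  have "z \<in> set as" using len n unfolding z_def by auto
  hence "poly (char_poly Ac) z = 0" unfolding cp by (rule linear_poly_root)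
  hence "eigenvalue Ac z" using eigenvalue_root_char_poly[OF Ac] by auto
  then obtain u where u: "u \<in> carrier_vec n" "u \<noteq> 0\<^sub>v n" "Ac *\<^sub>v u = z \<cdot>\<^sub>v u"
    unfolding eigenvalue_def eigenvector_def using Ac by auto
  define s where "s = (\<Sum>i<n. cnj (u $ i) * (Ac *\<^sub>v u) $ i)"
  define R where "R = (\<Sum>i<n. (Re (u $ i))\<^sup>2 + (Im (u $ i))\<^sup>2)"
  have s1: "s = z * complex_of_real R"
  proof -
    have "s = (\<Sum>i<n. z * (u $ i * cnj (u $ i)))" unfolding s_def using u
      by (intro sum.cong) (auto simp: ac_simps)
    also have "\<dots> = z * complex_of_real R" unfolding R_def complex_mult_cnj
      by (simp add: sum_distrib_left)
    finally show ?thesis .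
  qed
  have s2: "s = (\<Sum>i<n. \<Sum>j<n. cnj (u $ i) * complex_of_real (A $$ (i,j)) * u $ j)"
    unfolding s_def using u(1) A Ac
    by (intro sum.cong) (auto simp: Ac_def scalar_prod_def lessThan_atLeast0 sum_distrib_left ac_simps)
  have "cnj s = (\<Sum>i<n. \<Sum>j<n. u $ i * complex_of_real (A $$ (i,j)) * cnj (u $ j))"
    unfolding s2 by (simp add: cnj_sum)
  also have "\<dots> = (\<Sum>j<n. \<Sum>i<n. u $ i * complex_of_real (A $$ (i,j)) * cnj (u $ j))"
    by (rule sum.swap)
  also have "\<dots> = s" unfolding s2
  proof (intro sum.cong refl)
    fix j i assume "j \<in> {..<n}" "i \<in> {..<n}"
    hence "A $$ (i,j) = A $$ (j,i)" using sym A
      by (metis carrier_matD(1,2) index_transpose_mat(1) lessThan_iff)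
    thus "u $ i * complex_of_real (A $$ (i, j)) * cnj (u $ j)
          = cnj (u $ j) * complex_of_real (A $$ (j, i)) * u $ i" by simp
  qed
  finally have "Im s = 0" by (metis cnj.sel(2) equal_neg_zero)
  have Rpos: "R > 0"
  proof -
    obtain i where i: "i < n" "u $ i \<noteq> 0" using u
      by (metis carrier_vecD eq_vecI index_zero_vec(1,2))
    have "(Re (u $ i))\<^sup>2 + (Im (u $ i))\<^sup>2 > 0" using i(2)
      by (auto simp: sum_power2_gt_zero_iff complex_eq_iff)
    moreover have "(Re (u $ i))\<^sup>2 + (Im (u $ i))\<^sup>2 \<le> R" unfolding R_def
      by (rule member_le_sum) (use i in auto)
    ultimately show ?thesis by auto
  qed
  have "Im z = 0" using \<open>Im s = 0\<close> s1 Rpos by simp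
  define l where "l = Re z"
  have zl: "z = complex_of_real l" unfolding l_def using \<open>Im z = 0\<close> by (simp add: complex_eq_iff)
  have "char_poly Ac = map_poly complex_of_real (char_poly A)"
    unfolding Ac_def by (rule of_real_hom.char_poly_hom[OF A])
  hence "complex_of_real (poly (char_poly A) l) = 0"
    using \<open>poly (char_poly Ac) z = 0\<close> unfolding zl by (simp add: of_real_hom.poly_map_poly)
  hence "eigenvalue A l" using eigenvalue_root_char_poly[OF A] by simp
  then obtain w where w: "w \<in> carrier_vec n" "w \<noteq> 0\<^sub>v n" "A *\<^sub>v w = l \<cdot>\<^sub>v w"
    unfolding eigenvalue_def eigenvector_def using A by auto
  have wwpos: "w \<bullet> w > 0"
  proof -
    obtain i where i: "i < n" "w $ i \<noteq> 0" using w
      by (metis carrier_vecD eq_vecI index_zero_vec(1,2))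
    have "w \<bullet> w = (\<Sum>k<n. w $ k * w $ k)" using w by (simp add: scalar_prod_def lessThan_atLeast0)
    moreover have "w $ i * w $ i > 0" using i by (auto simp add: zero_less_mult_iff linorder_neq_iff)
    moreover have "w $ i * w $ i \<le> (\<Sum>k<n. w $ k * w $ k)"
      by (rule member_le_sum) (use i in auto)
    ultimately show ?thesis by auto
  qed
  define v where "v = (1 / sqrt (w \<bullet> w)) \<cdot>\<^sub>v w"
  have v: "v \<in> carrier_vec n" using w unfolding v_def by auto
  have "v \<bullet> v = (1 / sqrt (w \<bullet> w)) * (1 / sqrt (w \<bullet> w)) * (w \<bullet> w)"
    unfolding v_def using w by (simp add: smult_scalar_prod_distrib scalar_prod_smult_distrib)
  also have "\<dots> = 1" using wwpos by (simp add: field_simps)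
  finally have vv: "v \<bullet> v = 1" .
  have "A *\<^sub>v v = l \<cdot>\<^sub>v v" unfolding v_def using w A
    by (simp add: mult_mat_vec smult_smult_assoc mult.commute)
  thus ?thesis using v vv by blast
qed

lemma spectral:
  fixes A :: "real mat"
  assumes "A \<in> carrier_mat n n" "transpose_mat A = A"
  shows "\<exists>Q d. orth_mat n Q \<and> length d = n \<and> A = Q * diag_real d * transpose_mat Q"
  using assms
proof (induction n arbitrary: A)
  case 0
  show ?case
    by (intro exI[of _ "1\<^sub>m 0"] exI[of _ "[]"]) (use 0 in \<open>auto simp: orth_mat_def diag_real_def intro!: eq_matI\<close>)
next
  case (Suc n)
  note A = Suc.prems(1) and sym = Suc.prems(2)
  obtain l v where v: "v \<in> carrier_vec (Suc n)" "v \<bullet> v = 1" "A *\<^sub>v v = l \<cdot>\<^sub>v v"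
    using sym_real_eigen[OF A sym] by auto
  obtain W where W: "orth_mat (Suc n) W" "col W 0 = v"
    using unit_vec_completion[OF v(1) _ v(2)] by auto
  have Wc: "W \<in> carrier_mat (Suc n) (Suc n)" and WW: "transpose_mat W * W = 1\<^sub>m (Suc n)"
    using W(1) unfolding orth_mat_def by auto
  have WW': "W * transpose_mat W = 1\<^sub>m (Suc n)" using orth_mat_right[OF W(1)] .
  define B where "B = transpose_mat W * A * W"
  have Bc: "B \<in> carrier_mat (Suc n) (Suc n)" unfolding B_def using Wc A by auto
  have Bsym: "transpose_mat B = B"
  proof -
    have "transpose_mat B = transpose_mat W * transpose_mat (transpose_mat W * A)"
      unfolding B_def by (rule transpose_mult) (use Wc A in auto)
    also have "transpose_mat (transpose_mat W * A) = transpose_mat A * W"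
      by (subst transpose_mult) (use Wc A in auto)
    finally show ?thesis unfolding B_def sym using Wc A
      assoc_mult_mat[of "transpose_mat W" "Suc n" "Suc n" A "Suc n" W "Suc n"] by auto
  qed
  have colB: "col B 0 = l \<cdot>\<^sub>v unit_vec (Suc n) 0"
  proof -
    have "col B 0 = (transpose_mat W * A) *\<^sub>v col W 0" unfolding B_def
      using Wc A by (subst col_mult2) auto
    also have "\<dots> = transpose_mat W *\<^sub>v (A *\<^sub>v v)" using W(2) Wc A v by (simp add: assoc_mult_mat_vec)
    also have "\<dots> = l \<cdot>\<^sub>v (transpose_mat W *\<^sub>v v)" using v Wc by (simp add: mult_mat_vec)
    also have "transpose_mat W *\<^sub>v v = col (transpose_mat W * W) 0" using Wc W(2) by (subst col_mult2) auto
    also have "\<dots> = unit_vec (Suc n) 0" unfolding WW by simp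
    finally show ?thesis .
  qed
  define A3 where "A3 = mat n n (\<lambda>(i,j). B $$ (Suc i, Suc j))"
  have A3c: "A3 \<in> carrier_mat n n" unfolding A3_def by auto
  have Bs: "B $$ (a,b) = B $$ (b,a)" if "a < Suc n" "b < Suc n" for a b
  proof -
    have "B $$ (a,b) = transpose_mat B $$ (a,b)" using Bsym by simp
    also have "\<dots> = B $$ (b,a)" using that Bc by simp
    finally show ?thesis .
  qed
  have A3sym: "transpose_mat A3 = A3" unfolding A3_def
    by (rule eq_matI) (auto intro: Bs)
  have BA3: "B = blk1 l A3"
  proof (rule eq_matI)
    fix i j assume "i < dim_row (blk1 l A3)" "j < dim_col (blk1 l A3)"
    hence i: "i < Suc n" and j: "j < Suc n" using A3c unfolding blk1_def by auto
    have c0: "B $$ (k, 0) = (if k = 0 then l else 0)" if "k < Suc n" for k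
      using arg_cong[OF colB, of "\<lambda>x. x $ k"] that Bc by auto
    show "B $$ (i, j) = blk1 l A3 $$ (i, j)"
    proof (cases "j = 0")
      case True thus ?thesis using c0[OF i] i A3c by (auto simp: blk1_def)
    next
      case False
      show ?thesis
      proof (cases "i = 0")
        case True
        have "B $$ (i, j) = B $$ (j, i)" using Bs i j by auto
        thus ?thesis using c0[OF j] True False i j A3c by (auto simp: blk1_def)
      next
        case False
        thus ?thesis using \<open>j \<noteq> 0\<close> i j A3c by (auto simp: blk1_def A3_def)
      qed
    qed
  qed (use Bc A3c in \<open>auto simp: blk1_def\<close>)
  obtain Q3 d3 where IH: "orth_mat n Q3" "length d3 = n" "A3 = Q3 * diag_real d3 * transpose_mat Q3"
    using Suc.IH[OF A3c A3sym] by auto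
  have Q3c: "Q3 \<in> carrier_mat n n" and Q3Q3: "transpose_mat Q3 * Q3 = 1\<^sub>m n"
    using IH(1) unfolding orth_mat_def by auto
  have Dc: "diag_real d3 \<in> carrier_mat n n" using diag_real_carrier[of d3] IH(2) by simp
  define Q where "Q = W * blk1 1 Q3"
  have E: "blk1 1 Q3 \<in> carrier_mat (Suc n) (Suc n)" using blk1_carrier[OF Q3c] .
  have Qc: "Q \<in> carrier_mat (Suc n) (Suc n)" unfolding Q_def using Wc E by auto
  have QT: "transpose_mat Q = blk1 1 (transpose_mat Q3) * transpose_mat W"
    unfolding Q_def by (subst transpose_mult[OF Wc E]) (simp add: blk1_transpose)
  have ET: "blk1 1 (transpose_mat Q3) \<in> carrier_mat (Suc n) (Suc n)" using blk1_carrier Q3c by auto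
  have "transpose_mat Q * Q = blk1 1 (transpose_mat Q3) * (transpose_mat W * W) * blk1 1 Q3"
    unfolding QT unfolding Q_def by (rule assoc4) (use Wc E ET in auto)
  also have "\<dots> = blk1 1 (transpose_mat Q3) * blk1 1 Q3" unfolding WW
    by (rule arg_cong[where f = "\<lambda>X. X * _"], rule right_mult_one_mat) (use ET in auto)
  also have "\<dots> = blk1 1 (transpose_mat Q3 * Q3)"
    using blk1_mult[of "transpose_mat Q3" n n Q3 n 1 1] Q3c by auto
  also have "\<dots> = 1\<^sub>m (Suc n)" unfolding Q3Q3 blk1_one ..
  finally have orth: "orth_mat (Suc n) Q" using Qc unfolding orth_mat_def by auto
  have "Q * diag_real (l # d3) * transpose_mat Q
      = W * (blk1 1 Q3 * blk1 l (diag_real d3) * blk1 1 (transpose_mat Q3)) * transpose_mat W"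
    unfolding QT unfolding Q_def diag_real_Cons by (rule assoc5) (use Wc E ET Dc blk1_carrier in auto)
  also have "blk1 1 Q3 * blk1 l (diag_real d3) * blk1 1 (transpose_mat Q3) = blk1 l A3"
    unfolding IH(3) using Q3c Dc blk1_mult[of Q3 n n "diag_real d3" n 1 l]
      blk1_mult[of "Q3 * diag_real d3" n n "transpose_mat Q3" n l 1] by auto
  also have "\<dots> = B" using BA3 ..
  also have "W * B * transpose_mat W = (W * transpose_mat W) * A * (W * transpose_mat W)"
    unfolding B_def by (rule assoc6) (use Wc A in auto)
  also have "\<dots> = A" unfolding WW' using A by simp
  finally have "A = Q * diag_real (l # d3) * transpose_mat Q" ..
  thus ?case using orth IH(2) by (intro exI[of _ Q] exI[of _ "l # d3"]) auto
qed

lemma count_list_filter: "P x \<Longrightarrow> count_list (filter P d) x = count_list d x"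
  by (induct d) auto

lemma order_prod_linear: "order x (\<Prod>a\<leftarrow>d. [:- a, 1:]) = count_list d x"
proof -
  have "order x (\<Prod>a\<leftarrow>d. [:- a, 1:]) = sum_list (map (order x) (map (\<lambda>a. [:- a, 1:]) d))"
    by (rule order_prod_list) auto
  also have "\<dots> = count_list d x"
    by (induct d) (auto simp: order_linear')
  finally show ?thesis .
qed

lemma root_order_sum:
  "(\<Sum>x\<in>{x. P x \<and> poly (\<Prod>a\<leftarrow>d. [:- a, 1:]) x = 0}. order x (\<Prod>a\<leftarrow>d. [:- a, 1:]))
   = length (filter P d)"
proof -
  have S: "{x. P x \<and> poly (\<Prod>a\<leftarrow>d. [:- a, 1:]) x = 0} = set (filter P d)"
    by (auto simp: poly_prod_list_zero_iff)
  have "(\<Sum>x\<in>set (filter P d). count_list d x) = (\<Sum>x\<in>set (filter P d). count_list (filter P d) x)"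
    by (rule sum.cong) (auto simp: count_list_filter)
  also have "\<dots> = length (filter P d)" by (rule sum_count_set) auto
  finally show ?thesis unfolding S order_prod_linear .
qed

lemma diag_mat_diag_real: "diag_mat (diag_real d) = d"
  unfolding diag_mat_def diag_real_def by (rule nth_equalityI) auto

lemma sig_from_decomp:
  assumes Q: "orth_mat n Q" and len: "length d = n" and A: "A = Q * diag_real d * transpose_mat Q"
  shows "mat_signature A = int (length (filter (\<lambda>x. x > 0) d)) - int (length (filter (\<lambda>x. x < 0) d))"
proof -
  have Qc: "Q \<in> carrier_mat n n" and QQ: "transpose_mat Q * Q = 1\<^sub>m n" using Q unfolding orth_mat_def by auto
  have QQ': "Q * transpose_mat Q = 1\<^sub>m n" using orth_mat_right[OF Q] .
  have Dc: "diag_real d \<in> carrier_mat n n" using diag_real_carrier[of d] len by simp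
  have Ac: "A \<in> carrier_mat n n" using A Qc Dc by auto
  have "similar_mat A (diag_real d)" unfolding similar_mat_def similar_mat_wit_def
    by (intro exI[of _ Q] exI[of _ "transpose_mat Q"]) (use Ac Qc Dc QQ QQ' A in auto)
  hence "char_poly A = char_poly (diag_real d)" by (rule char_poly_similar)
  also have "\<dots> = (\<Prod>a\<leftarrow>d. [:- a, 1:])"
    using char_poly_upper_triangular[OF Dc] diag_mat_diag_real[of d]
    unfolding upper_triangular_def diag_real_def by auto
  finally have cp: "char_poly A = (\<Prod>a\<leftarrow>d. [:- a, 1:])" .
  show ?thesis unfolding mat_signature_def cp root_order_sum ..
qed

lemma qf_congr:
  assumes N: "N \<in> carrier_mat n n" and P: "P \<in> carrier_mat n m" and x: "x \<in> carrier_vec m"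
  shows "qf (transpose_mat P * N * P) x = qf N (P *\<^sub>v x)"
proof -
  have "(transpose_mat P * N * P) *\<^sub>v x = transpose_mat P *\<^sub>v (N *\<^sub>v (P *\<^sub>v x))"
  proof -
    have "(transpose_mat P * N * P) *\<^sub>v x = (transpose_mat P * N) *\<^sub>v (P *\<^sub>v x)"
      by (rule assoc_mult_mat_vec) (use N P x in auto)
    also have "\<dots> = transpose_mat P *\<^sub>v (N *\<^sub>v (P *\<^sub>v x))"
      by (rule assoc_mult_mat_vec) (use N P x in auto)
    finally show ?thesis .
  qed
  hence "qf (transpose_mat P * N * P) x = x \<bullet> (transpose_mat P *\<^sub>v (N *\<^sub>v (P *\<^sub>v x)))"
    unfolding qf_def by simp
  also have "\<dots> = (transpose_mat P *\<^sub>v (N *\<^sub>v (P *\<^sub>v x))) \<bullet> x"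
    by (rule comm_scalar_prod[of _ m]) (use N P x in auto)
  also have "\<dots> = (N *\<^sub>v (P *\<^sub>v x)) \<bullet> (P *\<^sub>v x)"
    by (rule transpose_vec_mult_scalar) (use N P x in auto)
  also have "\<dots> = qf N (P *\<^sub>v x)" unfolding qf_def
    by (rule comm_scalar_prod[of _ n]) (use N P x in auto)
  finally show ?thesis .
qed

lemma select_lemma:
  assumes Q: "orth_mat n Q" and len: "length d = n" and A: "A = Q * diag_real d * transpose_mat Q"
  and dist: "distinct idx" and idxn: "set idx \<subseteq> {..<n}"
  shows "\<exists>U \<in> carrier_mat n (length idx). \<forall>a \<in> carrier_vec (length idx).
        qf A (U *\<^sub>v a) = (\<Sum>j<length idx. d ! (idx ! j) * (a $ j)\<^sup>2) \<and>
        (U *\<^sub>v a = 0\<^sub>v n \<longrightarrow> a = 0\<^sub>v (length idx))"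
proof -
  define k where "k = length idx"
  have Qc: "Q \<in> carrier_mat n n" and QQ: "transpose_mat Q * Q = 1\<^sub>m n" using Q unfolding orth_mat_def by auto
  have Dc: "diag_real d \<in> carrier_mat n n" using diag_real_carrier[of d] len by simp
  define S where "S = mat n k (\<lambda>(i,j). if i = idx ! j then 1 else 0 :: real)"
  have Sc: "S \<in> carrier_mat n k" unfolding S_def by auto
  have Sa: "(S *\<^sub>v a) $ (idx ! j) = a $ j" if a: "a \<in> carrier_vec k" and j: "j < k" for a j
  proof -
    have ij: "idx ! j < n" using idxn j nth_mem[of j idx] unfolding k_def by blast
    have "(S *\<^sub>v a) $ (idx ! j) = (\<Sum>l<k. (if idx ! j = idx ! l then 1 else 0) * a $ l)"
      using Sc a ij by (auto simp: S_def scalar_prod_def lessThan_atLeast0)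
    also have "\<dots> = (\<Sum>l<k. (if l = j then a $ l else 0))"
      by (rule sum.cong) (use dist j in \<open>auto simp: k_def nth_eq_iff_index_eq\<close>)
    also have "\<dots> = a $ j" using j by simp
    finally show ?thesis .
  qed
  have Sa0: "(S *\<^sub>v a) $ i = 0" if a: "a \<in> carrier_vec k" and i: "i < n" "i \<notin> set idx" for a i
  proof -
    have "(S *\<^sub>v a) $ i = (\<Sum>l<k. (if i = idx ! l then 1 else 0) * a $ l)"
      using Sc a i by (auto simp: S_def scalar_prod_def lessThan_atLeast0)
    also have "\<dots> = 0" by (rule sum.neutral) (use i in \<open>auto simp: k_def\<close>)
    finally show ?thesis .
  qed
  define U where "U = Q * S"
  have Uc: "U \<in> carrier_mat n k" unfolding U_def using Qc Sc by auto
  have QTQ: "transpose_mat Q *\<^sub>v (Q *\<^sub>v y) = y" if "y \<in> carrier_vec n" for y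
    using that Qc QQ by (simp add: assoc_mult_mat_vec[symmetric, of _ n n _ n])
  have main: "qf A (U *\<^sub>v a) = (\<Sum>j<k. d ! (idx ! j) * (a $ j)\<^sup>2) \<and> (U *\<^sub>v a = 0\<^sub>v n \<longrightarrow> a = 0\<^sub>v k)"
    if a: "a \<in> carrier_vec k" for a
  proof
    define y where "y = S *\<^sub>v a"
    have y: "y \<in> carrier_vec n" unfolding y_def using Sc a by auto
    have Ua: "U *\<^sub>v a = Q *\<^sub>v y" unfolding U_def y_def using Qc Sc a by (simp add: assoc_mult_mat_vec)
    have Dy: "diag_real d *\<^sub>v y \<in> carrier_vec n" using Dc y by auto
    have "A *\<^sub>v (Q *\<^sub>v y) = Q *\<^sub>v (diag_real d *\<^sub>v (transpose_mat Q *\<^sub>v (Q *\<^sub>v y)))"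
      unfolding A using Qc Dc y by (simp add: assoc_mult_mat_vec[of _ n n _ n])
    also have "\<dots> = Q *\<^sub>v (diag_real d *\<^sub>v y)" using QTQ[OF y] by simp
    finally have AQy: "A *\<^sub>v (Q *\<^sub>v y) = Q *\<^sub>v (diag_real d *\<^sub>v y)" .
    have "qf A (U *\<^sub>v a) = (Q *\<^sub>v y) \<bullet> (Q *\<^sub>v (diag_real d *\<^sub>v y))" unfolding qf_def Ua AQy ..
    also have "\<dots> = y \<bullet> (transpose_mat Q *\<^sub>v (Q *\<^sub>v (diag_real d *\<^sub>v y)))"
      using transpose_vec_mult_scalar[of "transpose_mat Q" n n "Q *\<^sub>v (diag_real d *\<^sub>v y)" y] Qc y Dy
      by auto
    also have "\<dots> = y \<bullet> (diag_real d *\<^sub>v y)" using QTQ[OF Dy] by simp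
    also have "\<dots> = (\<Sum>i<n. d ! i * (y $ i)\<^sup>2)"
    proof -
      have Dyi: "(diag_real d *\<^sub>v y) $ i = d ! i * y $ i" if i: "i < n" for i
      proof -
        have "(diag_real d *\<^sub>v y) $ i = (\<Sum>j<n. (if i = j then d ! i else 0) * y $ j)"
          using i y len by (auto simp: diag_real_def scalar_prod_def lessThan_atLeast0)
        also have "\<dots> = (\<Sum>j<n. (if j = i then d ! i * y $ j else 0))"
          by (rule sum.cong) auto
        finally show ?thesis using i by simp
      qed
      have "y \<bullet> (diag_real d *\<^sub>v y) = (\<Sum>i\<in>{0..<n}. y $ i * (diag_real d *\<^sub>v y) $ i)"
        unfolding scalar_prod_def using Dc by (simp del: index_mult_mat_vec)
      also have "\<dots> = (\<Sum>i<n. d ! i * (y $ i)\<^sup>2)" unfolding lessThan_atLeast0[symmetric]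
        by (rule sum.cong) (auto simp: Dyi power2_eq_square)
      finally show ?thesis .
    qed
    also have "\<dots> = (\<Sum>i\<in>set idx. d ! i * (y $ i)\<^sup>2)"
      by (rule sum.mono_neutral_right) (use idxn Sa0[OF a] in \<open>auto simp: y_def\<close>)
    also have "\<dots> = (\<Sum>j<k. d ! (idx ! j) * (y $ (idx ! j))\<^sup>2)"
    proof -
      have "set idx = (\<lambda>j. idx ! j) ` {..<k}" unfolding k_def by (auto simp: in_set_conv_nth)
      moreover have "inj_on (\<lambda>j. idx ! j) {..<k}" using dist unfolding k_def
        by (auto simp: inj_on_def nth_eq_iff_index_eq)
      ultimately show ?thesis by (simp add: sum.reindex)
    qed
    also have "\<dots> = (\<Sum>j<k. d ! (idx ! j) * (a $ j)\<^sup>2)" unfolding y_def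
      by (rule sum.cong) (use Sa[OF a] in auto)
    finally show "qf A (U *\<^sub>v a) = (\<Sum>j<k. d ! (idx ! j) * (a $ j)\<^sup>2)" .
    show "U *\<^sub>v a = 0\<^sub>v n \<longrightarrow> a = 0\<^sub>v k"
    proof
      assume "U *\<^sub>v a = 0\<^sub>v n"
      hence "y = transpose_mat Q *\<^sub>v 0\<^sub>v n" using QTQ[OF y] Ua by simp
      also have "\<dots> = 0\<^sub>v n" using Qc by auto
      finally have y0: "y = 0\<^sub>v n" .
      show "a = 0\<^sub>v k"
      proof (rule eq_vecI)
        fix j assume "j < dim_vec (0\<^sub>v k)"
        hence j: "j < k" by auto
        have "idx ! j < n" using idxn j nth_mem[of j idx] unfolding k_def by blast
        thus "a $ j = 0\<^sub>v k $ j" using Sa[OF a j] y0 j unfolding y_def by auto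
      qed (use a in auto)
    qed
  qed
  show ?thesis using Uc main unfolding k_def by blast
qed

lemma qf_smult: assumes G: "G \<in> carrier_mat n n" and x: "x \<in> carrier_vec n"
  shows "qf (s \<cdot>\<^sub>m G) x = s * qf G x"
proof -
  have "(s \<cdot>\<^sub>m G) *\<^sub>v x = s \<cdot>\<^sub>v (G *\<^sub>v x)" using G x by (intro eq_vecI) (auto simp: scalar_prod_def sum_distrib_left ac_simps)
  thus ?thesis unfolding qf_def using G x by (simp add: scalar_prod_smult_right)
qed

lemma wsum_pos: fixes e :: "nat \<Rightarrow> real"
  assumes "\<And>j. j < k \<Longrightarrow> e j > 0" "a \<in> carrier_vec k" "a \<noteq> 0\<^sub>v k"
  shows "(\<Sum>j<k. e j * (a $ j)\<^sup>2) > 0"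
proof -
  obtain i where i: "i < k" "a $ i \<noteq> 0" using assms(2,3)
    by (metis carrier_vecD eq_vecI index_zero_vec(1,2))
  have "e i * (a $ i)\<^sup>2 > 0" using assms(1)[OF i(1)] i(2) by auto
  moreover have "e i * (a $ i)\<^sup>2 \<le> (\<Sum>j<k. e j * (a $ j)\<^sup>2)"
  proof (rule member_le_sum)
    fix x assume "x \<in> {..<k} - {i}"
    hence "e x > 0" using assms(1) by auto
    thus "0 \<le> e x * (a $ x)\<^sup>2" by simp
  qed (use i in auto)
  ultimately show ?thesis by auto
qed

lemma wsum_nonpos: fixes e :: "nat \<Rightarrow> real"
  assumes "\<And>j. j < k \<Longrightarrow> e j \<le> 0"
  shows "(\<Sum>j<k. e j * (a $ j)\<^sup>2) \<le> 0"
  by (rule sum_nonpos) (use assms in \<open>auto intro: mult_nonpos_nonneg\<close>)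

lemma len_idx: "length (filter (\<lambda>i. P (d ! i)) [0..<length d]) = length (filter P d)"
proof -
  have "length (filter P d) = length (filter P (map (nth d) [0..<length d]))" by (simp add: map_nth)
  also have "\<dots> = length (filter (\<lambda>i. P (d ! i)) [0..<length d])" by (simp add: length_filter_map o_def)
  finally show ?thesis ..
qed

lemma select_sign:
  assumes Q: "orth_mat n Q" and len: "length d = n" and A: "A = Q * diag_real d * transpose_mat Q"
  and An: "A \<in> carrier_mat n n"
  shows "\<exists>U \<in> carrier_mat n (length (filter \<phi> d)). \<forall>a \<in> carrier_vec (length (filter \<phi> d)).
        (\<exists>e. (\<forall>j < length (filter \<phi> d). \<phi> (e j)) \<and> qf A (U *\<^sub>v a) = (\<Sum>j<length (filter \<phi> d). e j * (a $ j)\<^sup>2)) \<and>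
        (U *\<^sub>v a = 0\<^sub>v n \<longrightarrow> a = 0\<^sub>v (length (filter \<phi> d)))"
proof -
  define idx where "idx = filter (\<lambda>i. \<phi> (d ! i)) [0..<n]"
  have li: "length idx = length (filter \<phi> d)" unfolding idx_def using len_idx[of \<phi> d] len by simp
  have "distinct idx" "set idx \<subseteq> {..<n}" unfolding idx_def by auto
  from select_lemma[OF Q len A this] obtain U where U: "U \<in> carrier_mat n (length idx)"
    "\<forall>a\<in>carrier_vec (length idx). qf A (U *\<^sub>v a) = (\<Sum>j<length idx. d ! (idx ! j) * (a $ j)\<^sup>2) \<and>
        (U *\<^sub>v a = 0\<^sub>v n \<longrightarrow> a = 0\<^sub>v (length idx))" by blast
  have "\<forall>j < length idx. \<phi> (d ! (idx ! j))"
    using nth_mem unfolding idx_def by (metis (mono_tags, lifting) mem_Collect_eq set_filter)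
  thus ?thesis using U unfolding li by (intro bexI[of _ U]) auto
qed

lemma dim_ineq:
  fixes G P :: "real mat" and s :: real
  assumes G: "G \<in> carrier_mat n n" and P: "P \<in> carrier_mat n m"
  and Pinj: "\<And>v. v \<in> carrier_vec m \<Longrightarrow> P *\<^sub>v v = 0\<^sub>v n \<Longrightarrow> v = 0\<^sub>v m"
  and Q1: "orth_mat n Q1" "length d1 = n" "G = Q1 * diag_real d1 * transpose_mat Q1"
  and Q2: "orth_mat m Q2" "length d2 = m" "transpose_mat P * G * P = Q2 * diag_real d2 * transpose_mat Q2"
  shows "length (filter (\<lambda>x. s * x > 0) d2) + length (filter (\<lambda>x. \<not> s * x > 0) d1) \<le> n"
    and "length (filter (\<lambda>x. s * x > 0) d1) + length (filter (\<lambda>x. \<not> s * x > 0) d2) \<le> n"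
proof -
  define N where "N = transpose_mat P * G * P"
  have Nc: "N \<in> carrier_mat m m" unfolding N_def using G P by auto
  have sG: "s \<cdot>\<^sub>m G \<in> carrier_mat n n" using G by auto
  let ?p1 = "length (filter (\<lambda>x. s * x > 0) d1)" and ?q1 = "length (filter (\<lambda>x. \<not> s * x > 0) d1)"
  let ?p2 = "length (filter (\<lambda>x. s * x > 0) d2)" and ?q2 = "length (filter (\<lambda>x. \<not> s * x > 0) d2)"
  obtain U1 where U1: "U1 \<in> carrier_mat n ?p1" "\<forall>a \<in> carrier_vec ?p1.
        (\<exists>e. (\<forall>j < ?p1. s * e j > 0) \<and> qf G (U1 *\<^sub>v a) = (\<Sum>j<?p1. e j * (a $ j)\<^sup>2)) \<and>
        (U1 *\<^sub>v a = 0\<^sub>v n \<longrightarrow> a = 0\<^sub>v ?p1)"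
    using select_sign[OF Q1 G, of "\<lambda>x. s * x > 0"] by blast
  obtain W1 where W1: "W1 \<in> carrier_mat n ?q1" "\<forall>a \<in> carrier_vec ?q1.
        (\<exists>e. (\<forall>j < ?q1. \<not> s * e j > 0) \<and> qf G (W1 *\<^sub>v a) = (\<Sum>j<?q1. e j * (a $ j)\<^sup>2)) \<and>
        (W1 *\<^sub>v a = 0\<^sub>v n \<longrightarrow> a = 0\<^sub>v ?q1)"
    using select_sign[OF Q1 G, of "\<lambda>x. \<not> s * x > 0"] by blast
  obtain U2 where U2: "U2 \<in> carrier_mat m ?p2" "\<forall>a \<in> carrier_vec ?p2.
        (\<exists>e. (\<forall>j < ?p2. s * e j > 0) \<and> qf N (U2 *\<^sub>v a) = (\<Sum>j<?p2. e j * (a $ j)\<^sup>2)) \<and>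
        (U2 *\<^sub>v a = 0\<^sub>v m \<longrightarrow> a = 0\<^sub>v ?p2)"
    using select_sign[OF Q2(1,2) Q2(3)[folded N_def] Nc, of "\<lambda>x. s * x > 0"] by blast
  obtain W2 where W2: "W2 \<in> carrier_mat m ?q2" "\<forall>a \<in> carrier_vec ?q2.
        (\<exists>e. (\<forall>j < ?q2. \<not> s * e j > 0) \<and> qf N (W2 *\<^sub>v a) = (\<Sum>j<?q2. e j * (a $ j)\<^sup>2)) \<and>
        (W2 *\<^sub>v a = 0\<^sub>v m \<longrightarrow> a = 0\<^sub>v ?q2)"
    using select_sign[OF Q2(1,2) Q2(3)[folded N_def] Nc, of "\<lambda>x. \<not> s * x > 0"] by blast
  have sq: "s * (\<Sum>j<k. e j * (a $ j)\<^sup>2) = (\<Sum>j<k. (s * e j) * (a $ j)\<^sup>2)" for k e and a :: "real vec"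
    by (simp add: sum_distrib_left ac_simps)
  show "?p2 + ?q1 \<le> n"
  proof (rule indef_dim_bound[OF sG])
    show "P * U2 \<in> carrier_mat n ?p2" using P U2(1) by auto
    show "W1 \<in> carrier_mat n ?q1" by (rule W1(1))
    show "qf (s \<cdot>\<^sub>m G) ((P * U2) *\<^sub>v a) > 0" if a: "a \<in> carrier_vec ?p2" "a \<noteq> 0\<^sub>v ?p2" for a
    proof -
      obtain e where e: "\<forall>j < ?p2. s * e j > 0" "qf N (U2 *\<^sub>v a) = (\<Sum>j<?p2. e j * (a $ j)\<^sup>2)"
        using U2(2) a(1) by blast
      have "(P * U2) *\<^sub>v a = P *\<^sub>v (U2 *\<^sub>v a)" using P U2(1) a by (simp add: assoc_mult_mat_vec)
      hence "qf (s \<cdot>\<^sub>m G) ((P * U2) *\<^sub>v a) = s * qf N (U2 *\<^sub>v a)"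
        using qf_smult[OF G] qf_congr[OF G P] U2(1) a P unfolding N_def by auto
      also have "\<dots> > 0" unfolding e(2) sq by (rule wsum_pos) (use e(1) a in auto)
      finally show ?thesis .
    qed
    show "qf (s \<cdot>\<^sub>m G) (W1 *\<^sub>v b) \<le> 0" if b: "b \<in> carrier_vec ?q1" for b
    proof -
      obtain e where e: "\<forall>j < ?q1. \<not> s * e j > 0" "qf G (W1 *\<^sub>v b) = (\<Sum>j<?q1. e j * (b $ j)\<^sup>2)"
        using W1(2) b by blast
      have "qf (s \<cdot>\<^sub>m G) (W1 *\<^sub>v b) = s * qf G (W1 *\<^sub>v b)" using qf_smult[OF G] W1(1) b by auto
      also have "\<dots> \<le> 0" unfolding e(2) sq by (rule wsum_nonpos) (use e(1) in auto)
      finally show ?thesis .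
    qed
    show "b = 0\<^sub>v ?q1" if "b \<in> carrier_vec ?q1" "W1 *\<^sub>v b = 0\<^sub>v n" for b using W1(2) that by blast
  qed
  show "?p1 + ?q2 \<le> n"
  proof (rule indef_dim_bound[OF sG])
    show "U1 \<in> carrier_mat n ?p1" by (rule U1(1))
    show "P * W2 \<in> carrier_mat n ?q2" using P W2(1) by auto
    show "qf (s \<cdot>\<^sub>m G) (U1 *\<^sub>v a) > 0" if a: "a \<in> carrier_vec ?p1" "a \<noteq> 0\<^sub>v ?p1" for a
    proof -
      obtain e where e: "\<forall>j < ?p1. s * e j > 0" "qf G (U1 *\<^sub>v a) = (\<Sum>j<?p1. e j * (a $ j)\<^sup>2)"
        using U1(2) a(1) by blast
      have "qf (s \<cdot>\<^sub>m G) (U1 *\<^sub>v a) = s * qf G (U1 *\<^sub>v a)" using qf_smult[OF G] U1(1) a by auto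
      also have "\<dots> > 0" unfolding e(2) sq by (rule wsum_pos) (use e(1) a in auto)
      finally show ?thesis .
    qed
    have PW: "(P * W2) *\<^sub>v b = P *\<^sub>v (W2 *\<^sub>v b)" if "b \<in> carrier_vec ?q2" for b
      using P W2(1) that by (simp add: assoc_mult_mat_vec)
    show "qf (s \<cdot>\<^sub>m G) ((P * W2) *\<^sub>v b) \<le> 0" if b: "b \<in> carrier_vec ?q2" for b
    proof -
      obtain e where e: "\<forall>j < ?q2. \<not> s * e j > 0" "qf N (W2 *\<^sub>v b) = (\<Sum>j<?q2. e j * (b $ j)\<^sup>2)"
        using W2(2) b by blast
      have "qf (s \<cdot>\<^sub>m G) ((P * W2) *\<^sub>v b) = s * qf N (W2 *\<^sub>v b)"
        using PW[OF b] qf_smult[OF G] qf_congr[OF G P] W2(1) b P unfolding N_def by auto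
      also have "\<dots> \<le> 0" unfolding e(2) sq by (rule wsum_nonpos) (use e(1) in auto)
      finally show ?thesis .
    qed
    show "b = 0\<^sub>v ?q2" if b: "b \<in> carrier_vec ?q2" "(P * W2) *\<^sub>v b = 0\<^sub>v n" for b
    proof -
      have "W2 *\<^sub>v b = 0\<^sub>v m" using Pinj[of "W2 *\<^sub>v b"] PW[OF b(1)] b W2(1) by auto
      thus ?thesis using W2(2) b(1) by blast
    qed
  qed
qed

lemma inertia_bound:
  fixes N P :: "real mat"
  assumes N: "N \<in> carrier_mat n n" and sym: "transpose_mat N = N" and P: "P \<in> carrier_mat n m"
  and Pinj: "\<And>v. v \<in> carrier_vec m \<Longrightarrow> P *\<^sub>v v = 0\<^sub>v n \<Longrightarrow> v = 0\<^sub>v m"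
  shows "\<bar>mat_signature (transpose_mat P * N * P) - mat_signature N\<bar> \<le> int n - int m"
proof -
  define N' where "N' = transpose_mat P * N * P"
  have N'c: "N' \<in> carrier_mat m m" unfolding N'_def using N P by auto
  have sym': "transpose_mat N' = N'"
  proof -
    have "transpose_mat N' = transpose_mat P * transpose_mat (transpose_mat P * N)"
      unfolding N'_def by (rule transpose_mult) (use N P in auto)
    also have "transpose_mat (transpose_mat P * N) = N * P"
      by (subst transpose_mult[of _ m n]) (use N P sym in auto)
    finally show ?thesis unfolding N'_def using N P
      assoc_mult_mat[of "transpose_mat P" m n N n P m] by auto
  qed
  obtain Q1 d1 where Q1: "orth_mat n Q1" "length d1 = n" "N = Q1 * diag_real d1 * transpose_mat Q1"
    using spectral[OF N sym] by auto
  obtain Q2 d2 where Q2: "orth_mat m Q2" "length d2 = m" "N' = Q2 * diag_real d2 * transpose_mat Q2"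
    using spectral[OF N'c sym'] by auto
  note A = dim_ineq[OF N P Pinj Q1 Q2(1,2) Q2(3)[unfolded N'_def], of 1]
  note B = dim_ineq[OF N P Pinj Q1 Q2(1,2) Q2(3)[unfolded N'_def], of "-1"]
  have c1: "length (filter (\<lambda>x. 0 < x) d1) + length (filter (\<lambda>x. \<not> 0 < x) d1) = n"
    using sum_length_filter_compl[of "\<lambda>x. 0 < x" d1] Q1(2) by simp
  have c2: "length (filter (\<lambda>x. 0 < x) d2) + length (filter (\<lambda>x. \<not> 0 < x) d2) = m"
    using sum_length_filter_compl[of "\<lambda>x. 0 < x" d2] Q2(2) by simp
  have c3: "length (filter (\<lambda>x. 0 < - x) d1) + length (filter (\<lambda>x. \<not> 0 < - x) d1) = n"
    using sum_length_filter_compl[of "\<lambda>x. 0 < - x" d1] Q1(2) by simp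
  have c4: "length (filter (\<lambda>x. 0 < - x) d2) + length (filter (\<lambda>x. \<not> 0 < - x) d2) = m"
    using sum_length_filter_compl[of "\<lambda>x. 0 < - x" d2] Q2(2) by simp
  have neg1: "filter (\<lambda>x. 0 < - x) d1 = filter (\<lambda>x. x < 0) d1" by (rule filter_cong) auto
  have neg2: "filter (\<lambda>x. 0 < - x) d2 = filter (\<lambda>x. x < 0) d2" by (rule filter_cong) auto
  have s1: "mat_signature N = int (length (filter (\<lambda>x. x > 0) d1)) - int (length (filter (\<lambda>x. x < 0) d1))"
    by (rule sig_from_decomp[OF Q1])
  have s2: "mat_signature N' = int (length (filter (\<lambda>x. x > 0) d2)) - int (length (filter (\<lambda>x. x < 0) d2))"
    by (rule sig_from_decomp[OF Q2])
  show ?thesis using A B c1 c2 c3 c4 s1 s2 unfolding N'_def[symmetric] neg1 neg2 by simp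
qed

lemma char_poly_block_diag:
  fixes A B :: "real mat"
  assumes A: "A \<in> carrier_mat n n" and B: "B \<in> carrier_mat m m"
  shows "char_poly (four_block_mat A (0\<^sub>m n m) (0\<^sub>m m n) B) = char_poly A * char_poly B"
proof -
  have "char_poly_matrix (four_block_mat A (0\<^sub>m n m) (0\<^sub>m m n) B)
      = four_block_mat (char_poly_matrix A) (0\<^sub>m n m) (0\<^sub>m m n) (char_poly_matrix B)"
    using A B by (intro eq_matI) (auto simp: char_poly_matrix_def four_block_mat_def)
  thus ?thesis unfolding char_poly_def
    using det_four_block_mat_lower_left_zero[of "char_poly_matrix A" n "0\<^sub>m n m" m "0\<^sub>m m n" "char_poly_matrix B"] A B
    by auto
qed

lemma cp_from_decomp:
  assumes Q: "orth_mat n Q" and len: "length d = n" and A: "A = Q * diag_real d * transpose_mat Q"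
  shows "char_poly A = (\<Prod>a\<leftarrow>d. [:- a, 1:])"
proof -
  have Qc: "Q \<in> carrier_mat n n" and QQ: "transpose_mat Q * Q = 1\<^sub>m n" using Q unfolding orth_mat_def by auto
  have QQ': "Q * transpose_mat Q = 1\<^sub>m n" using orth_mat_right[OF Q] .
  have Dc: "diag_real d \<in> carrier_mat n n" using diag_real_carrier[of d] len by simp
  have Ac: "A \<in> carrier_mat n n" using A Qc Dc by auto
  have "similar_mat A (diag_real d)" unfolding similar_mat_def similar_mat_wit_def
    by (intro exI[of _ Q] exI[of _ "transpose_mat Q"]) (use Ac Qc Dc QQ QQ' A in auto)
  hence "char_poly A = char_poly (diag_real d)" by (rule char_poly_similar)
  also have "\<dots> = (\<Prod>a\<leftarrow>d. [:- a, 1:])"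
    using char_poly_upper_triangular[OF Dc] diag_mat_diag_real[of d]
    unfolding upper_triangular_def diag_real_def by auto
  finally show ?thesis .
qed

lemma sig_block_diag:
  fixes A B :: "real mat"
  assumes A: "A \<in> carrier_mat n n" "transpose_mat A = A" and B: "B \<in> carrier_mat m m" "transpose_mat B = B"
  shows "mat_signature (four_block_mat A (0\<^sub>m n m) (0\<^sub>m m n) B) = mat_signature A + mat_signature B"
proof -
  obtain Q1 d1 where Q1: "orth_mat n Q1" "length d1 = n" "A = Q1 * diag_real d1 * transpose_mat Q1"
    using spectral[OF A] by auto
  obtain Q2 d2 where Q2: "orth_mat m Q2" "length d2 = m" "B = Q2 * diag_real d2 * transpose_mat Q2"
    using spectral[OF B] by auto
  have cpeq: "char_poly (four_block_mat A (0\<^sub>m n m) (0\<^sub>m m n) B) = (\<Prod>a\<leftarrow>d1 @ d2. [:- a, 1:])"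
    unfolding char_poly_block_diag[OF A(1) B(1)] cp_from_decomp[OF Q1] cp_from_decomp[OF Q2] by simp
  have "mat_signature (four_block_mat A (0\<^sub>m n m) (0\<^sub>m m n) B)
      = int (length (filter (\<lambda>x. x > 0) (d1 @ d2))) - int (length (filter (\<lambda>x. x < 0) (d1 @ d2)))"
    unfolding mat_signature_def cpeq root_order_sum by simp
  moreover have "mat_signature A = int (length (filter (\<lambda>x. x > 0) d1)) - int (length (filter (\<lambda>x. x < 0) d1))"
    by (rule sig_from_decomp[OF Q1])
  moreover have "mat_signature B = int (length (filter (\<lambda>x. x > 0) d2)) - int (length (filter (\<lambda>x. x < 0) d2))"
    by (rule sig_from_decomp[OF Q2])
  ultimately show ?thesis by simp
qed

definition is_loop :: "int list \<Rightarrow> nat \<Rightarrow> nat \<Rightarrow> bool" where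
  "is_loop w p q \<longleftrightarrow> p < q \<and> q < length w \<and> \<bar>w ! q\<bar> = \<bar>w ! p\<bar> \<and>
      (\<forall>r. p < r \<and> r < q \<longrightarrow> \<bar>w ! r\<bar> \<noteq> \<bar>w ! p\<bar>)"

lemma set_braid_loops: "set (braid_loops w) = {(p,q). is_loop w p q}"
  unfolding braid_loops_def is_loop_def by auto

lemma distinct_concat_key:
  assumes "distinct xs" "\<And>p. p \<in> set xs \<Longrightarrow> distinct (f p) \<and> (\<forall>x\<in>set (f p). g x = p)"
  shows "distinct (concat (map f xs))"
  using assms
proof (induct xs)
  case (Cons a xs)
  have "set (f a) \<inter> set (concat (map f xs)) = {}"
  proof (rule ccontr)
    assume "set (f a) \<inter> set (concat (map f xs)) \<noteq> {}"
    then obtain x p where "x \<in> set (f a)" "p \<in> set xs" "x \<in> set (f p)" by auto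
    hence "g x = a" "g x = p" using Cons.prems(2) by auto
    thus False using Cons.prems(1) \<open>p \<in> set xs\<close> by auto
  qed
  thus ?case using Cons by auto
qed simp

lemma distinct_braid_loops: "distinct (braid_loops w)"
  unfolding braid_loops_def
proof (rule distinct_concat_key[where g = fst])
  fix p
  show "distinct (concat (map (\<lambda>q. if \<bar>w ! q\<bar> = \<bar>w ! p\<bar> \<and> (\<forall>r. p < r \<and> r < q \<longrightarrow> \<bar>w ! r\<bar> \<noteq> \<bar>w ! p\<bar>)
      then [(p, q)] else []) [Suc p..<length w])) \<and>
    (\<forall>x\<in>set (concat (map (\<lambda>q. if \<bar>w ! q\<bar> = \<bar>w ! p\<bar> \<and> (\<forall>r. p < r \<and> r < q \<longrightarrow> \<bar>w ! r\<bar> \<noteq> \<bar>w ! p\<bar>)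
      then [(p, q)] else []) [Suc p..<length w])). fst x = p)"
    by (auto intro!: distinct_concat_key[where g = snd])
qed auto

lemma is_loop_unique1: "is_loop w p q \<Longrightarrow> is_loop w p q' \<Longrightarrow> q = q'"
  unfolding is_loop_def by (cases q q' rule: linorder_cases) auto

lemma is_loop_unique2: "is_loop w p q \<Longrightarrow> is_loop w p' q \<Longrightarrow> p = p'"
  unfolding is_loop_def by (cases p p' rule: linorder_cases) auto

definition gi :: "int list \<Rightarrow> nat \<Rightarrow> nat \<Rightarrow> int" where
  "gi w a b = (if a = b then - sgn (w ! a) else 0)
     + (if a < b \<and> \<bar>w ! b\<bar> = \<bar>w ! a\<bar> + 1 then 1 else 0)
     + (if b < a \<and> \<bar>w ! a\<bar> = \<bar>w ! b\<bar> + 1 then 1 else 0)"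

lemma entry_formula:
  assumes l1: "is_loop w p q" and l2: "is_loop w r s"
  shows "seifert_sym_entry w (p,q) (r,s) = gi w p r - gi w p s - gi w q r + gi w q s"
proof -
  have pq: "p < q" "\<bar>w ! q\<bar> = \<bar>w ! p\<bar>" and rs: "r < s" "\<bar>w ! s\<bar> = \<bar>w ! r\<bar>"
    using l1 l2 unfolding is_loop_def by auto
  show ?thesis
  proof (cases "(p,q) = (r,s)")
    case True thus ?thesis using pq unfolding seifert_sym_entry_def gi_def by auto
  next
    case ne: False
    have pr: "p \<noteq> r" using ne is_loop_unique1[OF l1] l2 by auto
    have qs: "q \<noteq> s" using ne is_loop_unique2[OF l1] l2 by auto
    show ?thesis
    proof (cases "q = r")
      case True thus ?thesis using pq rs ne unfolding seifert_sym_entry_def gi_def by auto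
    next
      case qr: False
      show ?thesis
      proof (cases "s = p")
        case True thus ?thesis using pq rs ne qr unfolding seifert_sym_entry_def gi_def by auto
      next
        case sp: False
        show ?thesis using pq rs ne qr sp pr qs unfolding seifert_sym_entry_def gi_def Let_def
          by auto
      qed
    qed
  qed
qed

definition lv :: "nat \<Rightarrow> nat \<Rightarrow> nat \<Rightarrow> real vec" where
  "lv N p q = unit_vec N p - unit_vec N q"

definition Cm :: "nat \<Rightarrow> (nat \<times> nat) list \<Rightarrow> real mat" where
  "Cm N ps = mat_of_cols N (map (\<lambda>(p,q). lv N p q) ps)"

lemma lv_carrier[simp]: "lv N p q \<in> carrier_vec N" unfolding lv_def by auto

lemma Cm_carrier: "Cm N ps \<in> carrier_mat N (length ps)" unfolding Cm_def by auto

lemma col_Cm: "j < length ps \<Longrightarrow> col (Cm N ps) j = lv N (fst (ps ! j)) (snd (ps ! j))"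
  unfolding Cm_def by (subst col_mat_of_cols) (auto split: prod.splits)

lemma bil_lv:
  assumes G: "G \<in> carrier_mat N N" and "p < N" "q < N" "r < N" "s < N"
  shows "lv N p q \<bullet> (G *\<^sub>v lv N r s) = G $$ (p,r) - G $$ (p,s) - G $$ (q,r) + G $$ (q,s)"
proof -
  have Gu: "(G *\<^sub>v unit_vec N t) $ i = G $$ (i, t)" if "t < N" "i < N" for t i
    using G that by (simp add: scalar_prod_right_unit)
  have "G *\<^sub>v lv N r s = G *\<^sub>v unit_vec N r - G *\<^sub>v unit_vec N s"
    unfolding lv_def by (rule mult_minus_distrib_mat_vec[OF G]) auto
  hence "lv N p q \<bullet> (G *\<^sub>v lv N r s)
     = (G *\<^sub>v unit_vec N r - G *\<^sub>v unit_vec N s) $ p - (G *\<^sub>v unit_vec N r - G *\<^sub>v unit_vec N s) $ q"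
    unfolding lv_def using G assms
    by (simp add: minus_scalar_prod_distrib[of _ N] scalar_prod_left_unit)
  thus ?thesis using G assms by (simp add: Gu)
qed

lemma congr_entry:
  assumes A: "A \<in> carrier_mat N k" and G: "G \<in> carrier_mat N N" and i: "i < k" and j: "j < k"
  shows "(transpose_mat A * G * A) $$ (i,j) = col A i \<bullet> (G *\<^sub>v col A j)"
proof -
  have "transpose_mat A * G * A = transpose_mat A * (G * A)" using A G by (simp add: assoc_mult_mat)
  hence "(transpose_mat A * G * A) $$ (i,j) = row (transpose_mat A) i \<bullet> col (G * A) j"
    using A G i j by simp
  also have "row (transpose_mat A) i = col A i" using A i by simp
  also have "col (G * A) j = G *\<^sub>v col A j" by (rule col_mult2[OF G A j])
  finally show ?thesis .
qed

lemma Cm_congr: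
  assumes G: "G \<in> carrier_mat N N" and ps: "\<And>p q. (p,q) \<in> set ps \<Longrightarrow> p < N \<and> q < N"
  shows "transpose_mat (Cm N ps) * G * Cm N ps = mat (length ps) (length ps) (\<lambda>(i,j).
     G $$ (fst (ps!i), fst (ps!j)) - G $$ (fst (ps!i), snd (ps!j))
     - G $$ (snd (ps!i), fst (ps!j)) + G $$ (snd (ps!i), snd (ps!j)))"
proof (rule eq_matI)
  fix i j assume "i < dim_row (mat (length ps) (length ps) (\<lambda>(i,j).
     G $$ (fst (ps!i), fst (ps!j)) - G $$ (fst (ps!i), snd (ps!j))
     - G $$ (snd (ps!i), fst (ps!j)) + G $$ (snd (ps!i), snd (ps!j))))"
     "j < dim_col (mat (length ps) (length ps) (\<lambda>(i,j).
     G $$ (fst (ps!i), fst (ps!j)) - G $$ (fst (ps!i), snd (ps!j))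
     - G $$ (snd (ps!i), fst (ps!j)) + G $$ (snd (ps!i), snd (ps!j))))"
  hence i: "i < length ps" and j: "j < length ps" by auto
  have bi: "fst (ps!i) < N" "snd (ps!i) < N" using ps[of "fst (ps!i)" "snd (ps!i)"] i by auto
  have bj: "fst (ps!j) < N" "snd (ps!j) < N" using ps[of "fst (ps!j)" "snd (ps!j)"] j by auto
  show "(transpose_mat (Cm N ps) * G * Cm N ps) $$ (i, j) = mat (length ps) (length ps) (\<lambda>(i,j).
     G $$ (fst (ps!i), fst (ps!j)) - G $$ (fst (ps!i), snd (ps!j))
     - G $$ (snd (ps!i), fst (ps!j)) + G $$ (snd (ps!i), snd (ps!j))) $$ (i, j)"
    unfolding congr_entry[OF Cm_carrier G i j] col_Cm[OF i] col_Cm[OF j]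
    using bil_lv[OF G bi bj] i j by simp
qed (use Cm_carrier G in auto)

lemma Cm_mult_vec:
  assumes v: "v \<in> carrier_vec (length ps)" and t: "t < N"
  shows "(Cm N ps *\<^sub>v v) $ t = (\<Sum>j<length ps. v $ j * ((if t = fst (ps!j) then 1 else 0) - (if t = snd (ps!j) then 1 else 0)))"
  using v t unfolding Cm_def mat_of_cols_def lv_def
  by (auto simp: unit_vec_def scalar_prod_def lessThan_atLeast0 split: prod.splits intro!: sum.cong)

lemma Cm_inj:
  assumes ps: "\<And>p q. (p,q) \<in> set ps \<Longrightarrow> p < q \<and> q < N" and dist: "distinct (map fst ps)"
  and v: "v \<in> carrier_vec (length ps)" and z: "Cm N ps *\<^sub>v v = 0\<^sub>v N"
  shows "v = 0\<^sub>v (length ps)"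
proof -
  have key: "\<forall>j < length ps. fst (ps ! j) = t \<longrightarrow> v $ j = 0" for t
  proof (induction t rule: less_induct)
    case (less t)
    show ?case
    proof (intro allI impI)
      fix j0 assume j0: "j0 < length ps" "fst (ps ! j0) = t"
      have tN: "t < N" using ps[of "fst (ps!j0)" "snd (ps!j0)"] j0 nth_mem[OF j0(1)] by auto
      have "0 = (Cm N ps *\<^sub>v v) $ t" using z tN by simp
      also have "\<dots> = (\<Sum>j<length ps. v $ j * ((if t = fst (ps!j) then 1 else 0) - (if t = snd (ps!j) then 1 else 0)))"
        by (rule Cm_mult_vec[OF v tN])
      also have "\<dots> = (\<Sum>j<length ps. if j = j0 then v $ j else 0)"
      proof (rule sum.cong[OF refl])
        fix j assume j: "j \<in> {..<length ps}"
        have lt: "fst (ps!j) < snd (ps!j)" using ps[of "fst (ps!j)" "snd (ps!j)"] j by auto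
        show "v $ j * ((if t = fst (ps!j) then 1 else 0) - (if t = snd (ps!j) then 1 else 0))
              = (if j = j0 then v $ j else 0)"
        proof (cases "j = j0")
          case True thus ?thesis using j0 lt by auto
        next
          case False
          have "t \<noteq> fst (ps ! j)" using False dist j j0 by (auto simp: nth_eq_iff_index_eq[symmetric])
          moreover have "t = snd (ps!j) \<longrightarrow> v $ j = 0" using less.IH[of "fst (ps!j)"] lt j by auto
          ultimately show ?thesis using False by auto
        qed
      qed
      also have "\<dots> = v $ j0" using j0 by simp
      finally show "v $ j0 = 0" by simp
    qed
  qed
  show ?thesis using key v by (intro eq_vecI) auto
qed

definition Gm :: "int list \<Rightarrow> real mat" where
  "Gm x = mat (length x) (length x) (\<lambda>(a,b). real_of_int (gi x a b))"

definition Mreal :: "int list \<Rightarrow> real mat" where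
  "Mreal x = map_mat real_of_int (seifert_sym_matrix x)"

lemma Gm_carrier: "Gm x \<in> carrier_mat (length x) (length x)" unfolding Gm_def by auto

lemma gi_sym: "gi x a b = gi x b a" unfolding gi_def by auto

lemma loops_bound: "(p,q) \<in> set (braid_loops x) \<Longrightarrow> p < q \<and> q < length x"
  unfolding set_braid_loops is_loop_def by auto

lemma Mreal_carrier: "Mreal x \<in> carrier_mat (length (braid_loops x)) (length (braid_loops x))"
  unfolding Mreal_def seifert_sym_matrix_def Let_def by auto

lemma Mreal_eq: "Mreal x = transpose_mat (Cm (length x) (braid_loops x)) * Gm x * Cm (length x) (braid_loops x)"
proof -
  let ?L = "braid_loops x"
  have "transpose_mat (Cm (length x) ?L) * Gm x * Cm (length x) ?L = mat (length ?L) (length ?L) (\<lambda>(i,j).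
     Gm x $$ (fst (?L!i), fst (?L!j)) - Gm x $$ (fst (?L!i), snd (?L!j))
     - Gm x $$ (snd (?L!i), fst (?L!j)) + Gm x $$ (snd (?L!i), snd (?L!j)))"
    by (rule Cm_congr[OF Gm_carrier]) (use loops_bound in fastforce)
  also have "\<dots> = Mreal x"
  proof (rule eq_matI)
    fix i j assume "i < dim_row (Mreal x)" "j < dim_col (Mreal x)"
    hence i: "i < length ?L" and j: "j < length ?L" using Mreal_carrier[of x] by auto
    obtain p q where pq: "?L ! i = (p,q)" by force
    obtain r s where rs: "?L ! j = (r,s)" by force
    have l1: "is_loop x p q" using nth_mem[OF i] pq set_braid_loops[of x] by auto
    have l2: "is_loop x r s" using nth_mem[OF j] rs set_braid_loops[of x] by auto
    have b: "p < length x" "q < length x" "r < length x" "s < length x"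
      using l1 l2 unfolding is_loop_def by auto
    show "mat (length ?L) (length ?L) (\<lambda>(i,j).
     Gm x $$ (fst (?L!i), fst (?L!j)) - Gm x $$ (fst (?L!i), snd (?L!j))
     - Gm x $$ (snd (?L!i), fst (?L!j)) + Gm x $$ (snd (?L!i), snd (?L!j))) $$ (i, j) = Mreal x $$ (i, j)"
      using i j b unfolding Mreal_def seifert_sym_matrix_def Let_def
      by (simp add: pq rs entry_formula[OF l1 l2] Gm_def)
  qed (use Mreal_carrier[of x] in auto)
  finally show ?thesis ..
qed

lemma Mreal_sym: "transpose_mat (Mreal x) = Mreal x"
proof -
  have "seifert_sym_entry x (braid_loops x ! j) (braid_loops x ! i) = seifert_sym_entry x (braid_loops x ! i) (braid_loops x ! j)"
    if i: "i < length (braid_loops x)" and j: "j < length (braid_loops x)" for i j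
  proof -
    obtain p q where pq: "braid_loops x ! i = (p,q)" by force
    obtain r s where rs: "braid_loops x ! j = (r,s)" by force
    have l1: "is_loop x p q" using nth_mem[OF i] pq set_braid_loops[of x] by auto
    have l2: "is_loop x r s" using nth_mem[OF j] rs set_braid_loops[of x] by auto
    show ?thesis unfolding pq rs entry_formula[OF l1 l2] entry_formula[OF l2 l1]
      by (simp add: gi_sym)
  qed
  thus ?thesis unfolding Mreal_def seifert_sym_matrix_def Let_def by (intro eq_matI) auto
qed

lemma next_loop:
  assumes "p < q" "q < length x" "\<bar>x ! q\<bar> = \<bar>x ! p\<bar>"
  shows "\<exists>p1. is_loop x p p1 \<and> p1 \<le> q"
proof -
  define p1 where "p1 = (LEAST r. p < r \<and> \<bar>x ! r\<bar> = \<bar>x ! p\<bar>)"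
  have P: "p < p1 \<and> \<bar>x ! p1\<bar> = \<bar>x ! p\<bar>" unfolding p1_def by (rule LeastI[of _ q]) (use assms in auto)
  have le: "p1 \<le> q" unfolding p1_def by (rule Least_le) (use assms in auto)
  have "\<forall>r. p < r \<and> r < p1 \<longrightarrow> \<bar>x ! r\<bar> \<noteq> \<bar>x ! p\<bar>"
    using not_less_Least unfolding p1_def by blast
  thus ?thesis using P le assms unfolding is_loop_def by (intro exI[of _ p1]) auto
qed

lemma mult_unit_col: fixes A :: "real mat" assumes A: "A \<in> carrier_mat N n" and k: "k < n"
  shows "A *\<^sub>v unit_vec n k = col A k"
proof (rule eq_vecI)
  fix i assume "i < dim_vec (col A k)"
  hence i: "i < N" using A by auto
  have r: "row A i \<in> carrier_vec n" using A by auto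
  show "(A *\<^sub>v unit_vec n k) $ i = col A k $ i"
    using A k i scalar_prod_right_unit[OF k, of "row A i"] by auto
qed (use A in auto)

lemma col_space:
  assumes "p < q" "q < length x" "\<bar>x ! q\<bar> = \<bar>x ! p\<bar>"
  shows "\<exists>y \<in> carrier_vec (length (braid_loops x)). Cm (length x) (braid_loops x) *\<^sub>v y = lv (length x) p q"
  using assms
proof (induction "q - p" arbitrary: p rule: less_induct)
  case less
  let ?L = "braid_loops x" and ?N = "length x"
  let ?D = "Cm ?N ?L"
  have D: "?D \<in> carrier_mat ?N (length ?L)" by (rule Cm_carrier)
  obtain p1 where p1: "is_loop x p p1" "p1 \<le> q" using next_loop[OF less.prems] by auto
  have "(p,p1) \<in> set ?L" using p1 set_braid_loops[of x] by auto
  then obtain k where k: "k < length ?L" "?L ! k = (p,p1)" by (auto simp: in_set_conv_nth)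
  have Dk: "?D *\<^sub>v unit_vec (length ?L) k = lv ?N p p1"
    using mult_unit_col[OF D k(1)] col_Cm[OF k(1)] k(2) by simp
  show ?case
  proof (cases "p1 = q")
    case True thus ?thesis using Dk by (intro bexI[of _ "unit_vec (length ?L) k"]) auto
  next
    case False
    hence lt: "p1 < q" using p1 by auto
    have pp1: "p < p1" "\<bar>x ! p1\<bar> = \<bar>x ! p\<bar>" using p1 unfolding is_loop_def by auto
    have "q - p1 < q - p" using lt pp1 by arith
    moreover have "\<bar>x ! q\<bar> = \<bar>x ! p1\<bar>" using pp1 less.prems(3) by simp
    ultimately obtain y' where y': "y' \<in> carrier_vec (length ?L)" "?D *\<^sub>v y' = lv ?N p1 q"
      using less.hyps[of p1] lt less.prems(2) by blast
    have "?D *\<^sub>v (unit_vec (length ?L) k + y') = ?D *\<^sub>v unit_vec (length ?L) k + ?D *\<^sub>v y'"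
      by (rule mult_add_distrib_mat_vec[OF D]) (use y' in auto)
    also have "\<dots> = lv ?N p q" unfolding Dk y'(2) lv_def by (intro eq_vecI) auto
    finally show ?thesis using y'(1) by (intro bexI[of _ "unit_vec (length ?L) k + y'"]) auto
  qed
qed

lemma loops_count: "length (braid_loops x) = length x - card (set (map abs x))"
proof -
  let ?L = "braid_loops x"
  define F where "F = {p. p < length x \<and> (\<exists>r. p < r \<and> r < length x \<and> \<bar>x ! r\<bar> = \<bar>x ! p\<bar>)}"
  define Ls where "Ls = {p. p < length x \<and> \<not> (\<exists>r. p < r \<and> r < length x \<and> \<bar>x ! r\<bar> = \<bar>x ! p\<bar>)}"
  have "length ?L = card (set ?L)" using distinct_braid_loops[of x] by (simp add: distinct_card)
  also have "card (set ?L) = card F"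
  proof (rule bij_betw_same_card[of fst])
    show "bij_betw fst (set ?L) F" unfolding bij_betw_def
    proof
      show "inj_on fst (set ?L)" unfolding set_braid_loops inj_on_def using is_loop_unique1 by auto
      show "fst ` set ?L = F"
      proof
        show "fst ` set ?L \<subseteq> F" unfolding set_braid_loops F_def is_loop_def by auto
        show "F \<subseteq> fst ` set ?L"
        proof
          fix p assume "p \<in> F"
          then obtain r where "p < r" "r < length x" "\<bar>x ! r\<bar> = \<bar>x ! p\<bar>" unfolding F_def by auto
          from next_loop[OF this] obtain p1 where "is_loop x p p1" by auto
          thus "p \<in> fst ` set ?L" unfolding set_braid_loops by force
        qed
      qed
    qed
  qed
  also have "card F = length x - card Ls"
  proof -
    have "F \<union> Ls = {..<length x}" "F \<inter> Ls = {}" unfolding F_def Ls_def by auto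
    hence "card F + card Ls = length x" using card_Un_disjoint[of F Ls] unfolding F_def Ls_def
      by (metis (no_types, lifting) card_lessThan finite_Un finite_lessThan finite_subset sup_ge1 sup_ge2 \<open>F \<union> Ls = {..<length x}\<close>[unfolded F_def Ls_def] \<open>F \<inter> Ls = {}\<close>[unfolded F_def Ls_def])
    thus ?thesis by simp
  qed
  also have "card Ls = card (set (map abs x))"
  proof (rule bij_betw_same_card[of "\<lambda>p. \<bar>x ! p\<bar>"])
    show "bij_betw (\<lambda>p. \<bar>x ! p\<bar>) Ls (set (map abs x))" unfolding bij_betw_def
    proof
      show "inj_on (\<lambda>p. \<bar>x ! p\<bar>) Ls"
      proof (rule inj_onI)
        fix p p' assume "p \<in> Ls" "p' \<in> Ls" "\<bar>x ! p\<bar> = \<bar>x ! p'\<bar>"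
        thus "p = p'" unfolding Ls_def by (cases p p' rule: linorder_cases) auto
      qed
      show "(\<lambda>p. \<bar>x ! p\<bar>) ` Ls = set (map abs x)"
      proof
        show "(\<lambda>p. \<bar>x ! p\<bar>) ` Ls \<subseteq> set (map abs x)" unfolding Ls_def by (auto intro!: imageI nth_mem)
        show "set (map abs x) \<subseteq> (\<lambda>p. \<bar>x ! p\<bar>) ` Ls"
        proof
          fix v assume "v \<in> set (map abs x)"
          then obtain i where i: "i < length x" "v = \<bar>x ! i\<bar>" by (auto simp: in_set_conv_nth)
          define S where "S = {j. j < length x \<and> \<bar>x ! j\<bar> = v}"
          have fS: "finite S" "S \<noteq> {}" using i unfolding S_def by auto
          define p where "p = Max S"
          have pS: "p \<in> S" unfolding p_def using Max_in[OF fS] .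
          have "p \<in> Ls"
          proof -
            have "\<not> (p < r \<and> r < length x \<and> \<bar>x ! r\<bar> = \<bar>x ! p\<bar>)" for r
            proof
              assume "p < r \<and> r < length x \<and> \<bar>x ! r\<bar> = \<bar>x ! p\<bar>"
              hence "r \<in> S" using pS unfolding S_def by auto
              hence "r \<le> p" unfolding p_def using Max_ge[OF fS(1)] by auto
              thus False using \<open>p < r \<and> _\<close> by auto
            qed
            thus ?thesis using pS unfolding Ls_def S_def by auto
          qed
          moreover have "v = \<bar>x ! p\<bar>" using pS unfolding S_def by auto
          ultimately show "v \<in> (\<lambda>p. \<bar>x ! p\<bar>) ` Ls" by auto
        qed
      qed
    qed
  qed
  finally show ?thesis .
qed

lemma Mreal_entry:
  assumes i: "i < length (braid_loops x)" and j: "j < length (braid_loops x)"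
  shows "Mreal x $$ (i,j) = real_of_int (gi x (fst (braid_loops x ! i)) (fst (braid_loops x ! j))
     - gi x (fst (braid_loops x ! i)) (snd (braid_loops x ! j))
     - gi x (snd (braid_loops x ! i)) (fst (braid_loops x ! j))
     + gi x (snd (braid_loops x ! i)) (snd (braid_loops x ! j)))"
proof -
  obtain p q where pq: "braid_loops x ! i = (p,q)" by force
  obtain r s where rs: "braid_loops x ! j = (r,s)" by force
  have l1: "is_loop x p q" using nth_mem[OF i] pq set_braid_loops[of x] by auto
  have l2: "is_loop x r s" using nth_mem[OF j] rs set_braid_loops[of x] by auto
  show ?thesis using i j unfolding Mreal_def seifert_sym_matrix_def Let_def
    by (simp add: pq rs entry_formula[OF l1 l2])
qed

lemma distinct_fst_loops: "distinct (map fst (braid_loops x))"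
proof -
  have "inj_on fst (set (braid_loops x))" unfolding set_braid_loops inj_on_def using is_loop_unique1 by auto
  thus ?thesis using distinct_braid_loops[of x] by (simp add: distinct_map)
qed

locale split_word =
  fixes al ga be :: "int list"
begin

definition w where "w = al @ ga @ be"
definition u where "u = al @ be"
definition io :: "nat \<Rightarrow> nat" where "io a = (if a < length al then a else a + length ga)"
definition fu :: "nat \<times> nat \<Rightarrow> nat \<times> nat" where "fu pq = (io (fst pq), io (snd pq))"
definition fg :: "nat \<times> nat \<Rightarrow> nat \<times> nat" where "fg pq = (fst pq + length al, snd pq + length al)"
definition ps where "ps = map fu (braid_loops u) @ map fg (braid_loops ga)"

lemma len_w: "length w = length u + length ga" unfolding w_def u_def by simp
lemma len_u: "length u = length al + length be" unfolding u_def by simp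

lemma w_io: "a < length u \<Longrightarrow> w ! (io a) = u ! a"
  unfolding w_def u_def io_def by (auto simp: nth_append)

lemma w_ga: "a < length ga \<Longrightarrow> w ! (a + length al) = ga ! a"
  unfolding w_def by (auto simp: nth_append)

lemma io_less: "io a < io b \<longleftrightarrow> a < b" unfolding io_def by auto
lemma io_eq: "io a = io b \<longleftrightarrow> a = b" unfolding io_def by auto
lemma io_bound: "a < length u \<Longrightarrow> io a < length w" unfolding io_def w_def u_def by auto
lemma io_out: "io a < length al \<or> io a \<ge> length al + length ga" unfolding io_def by auto

lemma gi_io: "a < length u \<Longrightarrow> b < length u \<Longrightarrow> gi w (io a) (io b) = gi u a b"
  unfolding gi_def by (simp only: w_io io_less io_eq)

lemma gi_ga: "a < length ga \<Longrightarrow> b < length ga \<Longrightarrow> gi w (a + length al) (b + length al) = gi ga a b"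
  unfolding gi_def by (simp add: w_ga)

lemma gi_cross:
  assumes a: "a < length u" and r: "r < length ga" and s: "s < length ga" and rs: "\<bar>ga ! r\<bar> = \<bar>ga ! s\<bar>"
  shows "gi w (io a) (r + length al) = gi w (io a) (s + length al)"
    and "gi w (r + length al) (io a) = gi w (s + length al) (io a)"
proof -
  consider (lo) "io a < length al" | (hi) "io a \<ge> length al + length ga" using io_out[of a] by auto
  hence "gi w (io a) (r + length al) = gi w (io a) (s + length al) \<and>
         gi w (r + length al) (io a) = gi w (s + length al) (io a)"
  proof cases
    case lo
    thus ?thesis unfolding gi_def w_ga[OF r] w_ga[OF s] rs by simp
  next
    case hi
    hence "r + length al < io a" "s + length al < io a" using r s by auto
    thus ?thesis unfolding gi_def w_ga[OF r] w_ga[OF s] rs by simp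
  qed
  thus "gi w (io a) (r + length al) = gi w (io a) (s + length al)"
    "gi w (r + length al) (io a) = gi w (s + length al) (io a)" by auto
qed

lemma loop_props: "(p,q) \<in> set (braid_loops x) \<Longrightarrow> p < q \<and> q < length x \<and> \<bar>x ! q\<bar> = \<bar>x ! p\<bar>"
  unfolding set_braid_loops is_loop_def by auto

lemma ps_props: assumes "(p,q) \<in> set ps" shows "p < q \<and> q < length w \<and> \<bar>w ! q\<bar> = \<bar>w ! p\<bar>"
proof -
  from assms consider (U) a b where "(a,b) \<in> set (braid_loops u)" "(p,q) = fu (a,b)"
    | (G) a b where "(a,b) \<in> set (braid_loops ga)" "(p,q) = fg (a,b)"
    unfolding ps_def by auto
  thus ?thesis
  proof cases
    case U
    note l = loop_props[OF U(1)]
    show ?thesis using U(2) l io_less[of a b] io_bound[of b] w_io[of a] w_io[of b]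
      unfolding fu_def by auto
  next
    case G
    note l = loop_props[OF G(1)]
    show ?thesis using G(2) l w_ga[of a] w_ga[of b] len_w len_u unfolding fg_def by auto
  qed
qed

lemma ps_distinct: "distinct (map fst ps)"
proof -
  have d1: "distinct (map (io \<circ> fst) (braid_loops u))"
  proof -
    have "inj io" unfolding inj_def using io_eq by auto
    hence "distinct (map io (map fst (braid_loops u)))"
      using distinct_map[of io "map fst (braid_loops u)"] distinct_fst_loops[of u] inj_on_subset[of io UNIV] by blast
    thus ?thesis by simp
  qed
  have d2: "distinct (map (\<lambda>pq. fst pq + length al) (braid_loops ga))"
  proof -
    have "map (\<lambda>pq. fst pq + length al) (braid_loops ga) = map (\<lambda>a. a + length al) (map fst (braid_loops ga))" by simp
    thus ?thesis using distinct_fst_loops[of ga] by (simp add: distinct_map inj_on_def)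
  qed
  have disj: "set (map (io \<circ> fst) (braid_loops u)) \<inter> set (map (\<lambda>pq. fst pq + length al) (braid_loops ga)) = {}"
  proof (rule ccontr)
    assume "\<not> ?thesis"
    then obtain a b c d where ab: "(a,b) \<in> set (braid_loops u)" and cd: "(c,d) \<in> set (braid_loops ga)"
      and eq: "io a = c + length al" by auto
    have "c + length al < length al + length ga" using loop_props[OF cd] by auto
    thus False using io_out[of a] eq by auto
  qed
  have "map fst ps = map (io \<circ> fst) (braid_loops u) @ map (\<lambda>pq. fst pq + length al) (braid_loops ga)"
    unfolding ps_def fu_def fg_def by simp
  thus ?thesis using d1 d2 disj by simp
qed

lemma length_ps: "length ps = length (braid_loops u) + length (braid_loops ga)"
  unfolding ps_def by simp

lemma Gm_entry: "a < length x \<Longrightarrow> b < length x \<Longrightarrow> Gm x $$ (a,b) = real_of_int (gi x a b)"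
  unfolding Gm_def by simp

lemma block:
  "transpose_mat (Cm (length w) ps) * Gm w * Cm (length w) ps
   = four_block_mat (Mreal u) (0\<^sub>m (length (braid_loops u)) (length (braid_loops ga)))
       (0\<^sub>m (length (braid_loops ga)) (length (braid_loops u))) (Mreal ga)"
proof -
  let ?m1 = "length (braid_loops u)" and ?m2 = "length (braid_loops ga)"
  let ?Lu = "braid_loops u" and ?Lg = "braid_loops ga"
  let ?la = "length al"
  have "transpose_mat (Cm (length w) ps) * Gm w * Cm (length w) ps = mat (length ps) (length ps) (\<lambda>(i,j).
     Gm w $$ (fst (ps!i), fst (ps!j)) - Gm w $$ (fst (ps!i), snd (ps!j))
     - Gm w $$ (snd (ps!i), fst (ps!j)) + Gm w $$ (snd (ps!i), snd (ps!j)))"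
    by (rule Cm_congr[OF Gm_carrier]) (fastforce dest: ps_props)
  also have "\<dots> = four_block_mat (Mreal u) (0\<^sub>m ?m1 ?m2) (0\<^sub>m ?m2 ?m1) (Mreal ga)"
  proof (rule eq_matI)
    fix i j assume "i < dim_row (four_block_mat (Mreal u) (0\<^sub>m ?m1 ?m2) (0\<^sub>m ?m2 ?m1) (Mreal ga))"
      "j < dim_col (four_block_mat (Mreal u) (0\<^sub>m ?m1 ?m2) (0\<^sub>m ?m2 ?m1) (Mreal ga))"
    hence i: "i < ?m1 + ?m2" and j: "j < ?m1 + ?m2" using Mreal_carrier[of u] Mreal_carrier[of ga] by auto
    have bnd: "fst (ps!k) < length w" "snd (ps!k) < length w" if "k < ?m1 + ?m2" for k
      using ps_props[of "fst (ps!k)" "snd (ps!k)"] nth_mem[of k ps] that length_ps by auto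
    have lhs: "mat (length ps) (length ps) (\<lambda>(i,j).
     Gm w $$ (fst (ps!i), fst (ps!j)) - Gm w $$ (fst (ps!i), snd (ps!j))
     - Gm w $$ (snd (ps!i), fst (ps!j)) + Gm w $$ (snd (ps!i), snd (ps!j))) $$ (i,j)
      = real_of_int (gi w (fst (ps!i)) (fst (ps!j)) - gi w (fst (ps!i)) (snd (ps!j))
     - gi w (snd (ps!i)) (fst (ps!j)) + gi w (snd (ps!i)) (snd (ps!j)))"
      using i j bnd[OF i] bnd[OF j] length_ps by (simp add: Gm_entry)
    have psU: "ps ! k = fu (?Lu ! k)" if "k < ?m1" for k using that unfolding ps_def by (simp add: nth_append)
    have psG: "ps ! k = fg (?Lg ! (k - ?m1))" if "k \<ge> ?m1" "k < ?m1 + ?m2" for k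
      using that unfolding ps_def by (simp add: nth_append)
    have bu: "fst (?Lu ! k) < length u \<and> snd (?Lu ! k) < length u" if "k < ?m1" for k
      using loop_props[of "fst (?Lu ! k)" "snd (?Lu ! k)" u] nth_mem[OF that] by auto
    have bg: "fst (?Lg ! k) < length ga \<and> snd (?Lg ! k) < length ga \<and> \<bar>ga ! fst (?Lg ! k)\<bar> = \<bar>ga ! snd (?Lg ! k)\<bar>"
      if "k < ?m2" for k
      using loop_props[of "fst (?Lg ! k)" "snd (?Lg ! k)" ga] nth_mem[OF that] by auto
    show "mat (length ps) (length ps) (\<lambda>(i,j).
     Gm w $$ (fst (ps!i), fst (ps!j)) - Gm w $$ (fst (ps!i), snd (ps!j))
     - Gm w $$ (snd (ps!i), fst (ps!j)) + Gm w $$ (snd (ps!i), snd (ps!j))) $$ (i,j)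
      = four_block_mat (Mreal u) (0\<^sub>m ?m1 ?m2) (0\<^sub>m ?m2 ?m1) (Mreal ga) $$ (i,j)"
    proof (cases "i < ?m1")
      case iU: True
      show ?thesis
      proof (cases "j < ?m1")
        case jU: True
        show ?thesis unfolding lhs psU[OF iU] psU[OF jU] using iU jU Mreal_carrier[of u] Mreal_carrier[of ga]
          by (simp add: Mreal_entry fu_def gi_io bu)
      next
        case jG: False
        have jj: "j - ?m1 < ?m2" using j jG by auto
        have psj: "ps ! j = fg (?Lg ! (j - ?m1))" using psG jG j by auto
        show ?thesis unfolding lhs psU[OF iU] psj using iU jG jj Mreal_carrier[of u] Mreal_carrier[of ga]
          gi_cross(1)[of "fst (?Lu ! i)" "fst (?Lg ! (j - ?m1))" "snd (?Lg ! (j - ?m1))"]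
          gi_cross(1)[of "snd (?Lu ! i)" "fst (?Lg ! (j - ?m1))" "snd (?Lg ! (j - ?m1))"]
          bu[OF iU] bg[OF jj]
          by (simp add: fu_def fg_def)
      qed
    next
      case iG: False
      have ii: "i - ?m1 < ?m2" using i iG by auto
      show ?thesis
      proof (cases "j < ?m1")
        case jU: True
        have psi: "ps ! i = fg (?Lg ! (i - ?m1))" using psG iG i by auto
        show ?thesis unfolding lhs psU[OF jU] psi using iG jU ii Mreal_carrier[of u] Mreal_carrier[of ga]
          gi_cross(2)[of "fst (?Lu ! j)" "fst (?Lg ! (i - ?m1))" "snd (?Lg ! (i - ?m1))"]
          gi_cross(2)[of "snd (?Lu ! j)" "fst (?Lg ! (i - ?m1))" "snd (?Lg ! (i - ?m1))"]
          bu[OF jU] bg[OF ii]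
          by (simp add: fu_def fg_def)
      next
        case jG: False
        have jj: "j - ?m1 < ?m2" using j jG by auto
        have psi: "ps ! i = fg (?Lg ! (i - ?m1))" using psG iG i by auto
        have psj: "ps ! j = fg (?Lg ! (j - ?m1))" using psG jG j by auto
        show ?thesis unfolding lhs psi psj using iG jG ii jj Mreal_carrier[of u] Mreal_carrier[of ga]
          by (simp add: Mreal_entry fg_def gi_ga bg)
      qed
    qed
  qed (use Mreal_carrier[of u] Mreal_carrier[of ga] length_ps in auto)
  finally show ?thesis .
qed

abbreviation "D \<equiv> Cm (length w) (braid_loops w)"
abbreviation "E \<equiv> Cm (length w) ps"

lemma exP: "\<exists>P \<in> carrier_mat (length (braid_loops w)) (length ps). D * P = E"
proof -
  let ?n = "length (braid_loops w)" and ?m = "length ps"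
  have "\<forall>j. \<exists>y. j < ?m \<longrightarrow> y \<in> carrier_vec ?n \<and> D *\<^sub>v y = col E j"
  proof (intro allI)
    fix j
    show "\<exists>y. j < ?m \<longrightarrow> y \<in> carrier_vec ?n \<and> D *\<^sub>v y = col E j"
    proof (cases "j < ?m")
      case True
      have pr: "fst (ps!j) < snd (ps!j) \<and> snd (ps!j) < length w \<and> \<bar>w ! snd (ps!j)\<bar> = \<bar>w ! fst (ps!j)\<bar>"
        using ps_props[of "fst (ps!j)" "snd (ps!j)"] nth_mem[OF True] by auto
      obtain y where "y \<in> carrier_vec ?n" "D *\<^sub>v y = lv (length w) (fst (ps!j)) (snd (ps!j))"
        using col_space[of "fst (ps!j)" "snd (ps!j)" w] pr by auto
      thus ?thesis using col_Cm[OF True] by auto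
    qed auto
  qed
  then obtain f where f: "\<And>j. j < ?m \<Longrightarrow> f j \<in> carrier_vec ?n \<and> D *\<^sub>v f j = col E j" by metis
  define P where "P = mat ?n ?m (\<lambda>(i,j). f j $ i)"
  have Pc: "P \<in> carrier_mat ?n ?m" unfolding P_def by auto
  have colP: "col P j = f j" if "j < ?m" for j
    using f[OF that] that unfolding P_def by (intro eq_vecI) auto
  have Dc: "D \<in> carrier_mat (length w) ?n" by (rule Cm_carrier)
  have "D * P = E"
  proof (rule eq_matI)
    fix i j assume "i < dim_row E" "j < dim_col E"
    hence i: "i < length w" and j: "j < ?m" using Cm_carrier[of "length w" ps] by auto
    have "(D * P) $$ (i,j) = row D i \<bullet> col P j" using Dc Pc i j by simp
    also have "\<dots> = (D *\<^sub>v f j) $ i" using colP[OF j] Dc i by simp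
    also have "\<dots> = E $$ (i,j)" using f[OF j] i j Cm_carrier[of "length w" ps] by simp
    finally show "(D * P) $$ (i,j) = E $$ (i,j)" .
  qed (use Dc Pc Cm_carrier[of "length w" ps] in auto)
  thus ?thesis using Pc by auto
qed

lemma E_inj: "v \<in> carrier_vec (length ps) \<Longrightarrow> E *\<^sub>v v = 0\<^sub>v (length w) \<Longrightarrow> v = 0\<^sub>v (length ps)"
  by (rule Cm_inj[OF _ ps_distinct]) (use ps_props in auto)

lemma congr_assoc:
  fixes P D G :: "real mat"
  assumes P: "P \<in> carrier_mat n m" and D: "D \<in> carrier_mat N n" and G: "G \<in> carrier_mat N N"
  shows "transpose_mat P * (transpose_mat D * G * D) * P = transpose_mat (D * P) * G * (D * P)"
proof -
  have Pt: "transpose_mat P \<in> carrier_mat m n" and Dt: "transpose_mat D \<in> carrier_mat n N" using P D by auto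
  have DG: "transpose_mat D * G \<in> carrier_mat n N" using Dt G by auto
  have "transpose_mat P * (transpose_mat D * G * D) * P = (transpose_mat P * (transpose_mat D * G) * D) * P"
    using assoc_mult_mat[OF Pt DG D] by simp
  also have "\<dots> = transpose_mat P * (transpose_mat D * G) * (D * P)"
    using assoc_mult_mat[OF mult_carrier_mat[OF Pt DG] D P] by simp
  also have "transpose_mat P * (transpose_mat D * G) = transpose_mat P * transpose_mat D * G"
    using assoc_mult_mat[OF Pt Dt G] by simp
  also have "transpose_mat P * transpose_mat D = transpose_mat (D * P)"
    using transpose_mult[OF D P] by simp
  finally show ?thesis .
qed

lemma card_abs_bound:
  assumes "braid_word b x" shows "set (map abs x) \<subseteq> {1..int b - 1}"
  using assms unfolding braid_word_def by auto

lemma count_bound: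
  assumes b: "b \<ge> 1" and wa: "braid_word b al" and wb: "braid_word b be" and wg: "braid_word b ga"
  shows "int (length (braid_loops w)) - int (length ps) \<le> int b - 1"
proof -
  let ?S = "\<lambda>x :: int list. set (map abs x)"
  have cl: "card (?S x) \<le> length x" for x by (metis card_length length_map)
  have n: "int (length (braid_loops w)) = int (length w) - int (card (?S w))"
    using loops_count[of w] cl[of w] by simp
  have m1: "int (length (braid_loops u)) = int (length u) - int (card (?S u))"
    using loops_count[of u] cl[of u] by simp
  have m2: "int (length (braid_loops ga)) = int (length ga) - int (card (?S ga))"
    using loops_count[of ga] cl[of ga] by simp
  have Sw: "?S w = ?S u \<union> ?S ga" unfolding w_def u_def by auto
  have ci: "card (?S u \<union> ?S ga) + card (?S u \<inter> ?S ga) = card (?S u) + card (?S ga)"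
    using card_Un_Int[of "?S u" "?S ga"] by simp
  have "?S u \<inter> ?S ga \<subseteq> {1..int b - 1}" using card_abs_bound[OF wg] by auto
  hence "card (?S u \<inter> ?S ga) \<le> card {1..int b - 1}" by (intro card_mono) auto
  also have "card {1..int b - 1} = b - 1" by simp
  finally have "card (?S u \<inter> ?S ga) \<le> b - 1" .
  thus ?thesis using n m1 m2 Sw ci len_w length_ps b by simp
qed

end

theorem mainTheorem10:
  fixes b :: nat and \<alpha> \<beta> \<gamma> :: "int list"
  assumes "b \<ge> 1"
    and "braid_word b \<alpha>" and "braid_word b \<beta>" and "braid_word b \<gamma>"
  shows "\<bar>braid_signature (\<alpha> @ \<gamma> @ \<beta>) - braid_signature (\<alpha> @ \<beta>) - braid_signature \<gamma>\<bar>
           \<le> int b - 1"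
proof -
  interpret split_word \<alpha> \<gamma> \<beta> .
  let ?n = "length (braid_loops w)" and ?m = "length ps"
  obtain P where P: "P \<in> carrier_mat ?n ?m" "D * P = E" using exP by auto
  have Dc: "D \<in> carrier_mat (length w) ?n" by (rule Cm_carrier)
  have Pinj: "v = 0\<^sub>v ?m" if v: "v \<in> carrier_vec ?m" "P *\<^sub>v v = 0\<^sub>v ?n" for v
  proof -
    have "E *\<^sub>v v = D *\<^sub>v (P *\<^sub>v v)" unfolding P(2)[symmetric] using Dc P(1) v(1)
      by (simp add: assoc_mult_mat_vec)
    also have "\<dots> = 0\<^sub>v (length w)" unfolding v(2) using Dc by (intro eq_vecI) auto
    finally show ?thesis using E_inj v(1) by blast
  qed
  have Nc: "Mreal w \<in> carrier_mat ?n ?n" by (rule Mreal_carrier)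
  have bound: "\<bar>mat_signature (transpose_mat P * Mreal w * P) - mat_signature (Mreal w)\<bar> \<le> int ?n - int ?m"
    by (rule inertia_bound[OF Nc Mreal_sym P(1) Pinj])
  have "transpose_mat P * Mreal w * P = transpose_mat E * Gm w * E"
    unfolding Mreal_eq[of w] congr_assoc[OF P(1) Dc Gm_carrier] P(2) ..
  also have "\<dots> = four_block_mat (Mreal u) (0\<^sub>m (length (braid_loops u)) (length (braid_loops \<gamma>)))
       (0\<^sub>m (length (braid_loops \<gamma>)) (length (braid_loops u))) (Mreal \<gamma>)" by (rule block)
  finally have "mat_signature (transpose_mat P * Mreal w * P) = mat_signature (Mreal u) + mat_signature (Mreal \<gamma>)"
    using sig_block_diag[OF Mreal_carrier Mreal_sym Mreal_carrier Mreal_sym] by simp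
  moreover have "braid_signature x = mat_signature (Mreal x)" for x
    unfolding braid_signature_def Mreal_def ..
  moreover have "int ?n - int ?m \<le> int b - 1" by (rule count_bound[OF assms(1,2,3,4)])
  ultimately show ?thesis using bound unfolding w_def u_def by simp
qed

end
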